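(* Let $k\geq 3$ and $n\geq 3$ be odd integers and let $G$ be a connected graph of order $n$. If $\lambda_1(D(G))\le \lambda_1(D(K_1\vee(K_{n-2}\cup K_1)))$, then $G$ is $\mathrm{GFC}_k$ unless $G\cong K_1\vee(K_{n-2}\cup K_1)$.
   Context: All graphs are finite, simple, undirected. For a connected graph $G$, $D(G)$ is its distance matrix (entry $(i,j)$ is the distance between $v_i$ and $v_j$) and $\lambda_1(D(G))$ its largest eigenvalue. $G\cup H$ is disjoint union, $G\vee H$ the join, $tK_1$ the edgeless graph on $t$ vertices. For a graph $H$, $i(H)$ is the number of isolated vertices of $H$ and $\mathrm{odd}(H)$ the number of components of $H$ with an odd number ($\ge 3$) of vertices, i.e. nontrivial odd components. The $k$-Berge–Tutte formula is $\mathrm{def}_k(G)=\max_{S\subseteq V(G)} \big(k\, i(G-S)-k|S|\big)$ if $k$ is even, and $\max_{S\subseteq V(G)}\big(\mathrm{odd}(G-S)+k\, i(G-S)-k|S|\big)$ if $k$ is odd; a set $S$ attaining the maximum is a $k$-barrier. A connected graph of odd order is $\mathrm{GFC}_k$ (generalized factor-critical about integer $k$-matching) if it has no non-empty $k$-barrier. *)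

theory Defs
  imports Complex_Main
begin

definition simple_graph :: "'a set \<Rightarrow> ('a \<Rightarrow> 'a \<Rightarrow> bool) \<Rightarrow> bool" where
  "simple_graph V E \<longleftrightarrow> finite V \<and>
     (\<forall>u v. E u v \<longrightarrow> u \<in> V \<and> v \<in> V \<and> u \<noteq> v) \<and>
     (\<forall>u v. E u v \<longrightarrow> E v u)"

text \<open>A walk in the graph (V,E): a nonempty list of vertices of V, consecutive
ones adjacent. Its length is the number of edges, i.e. length xs - 1.\<close>

definition walk :: "'a set \<Rightarrow> ('a \<Rightarrow> 'a \<Rightarrow> bool) \<Rightarrow> 'a list \<Rightarrow> bool" where
  "walk V E xs \<longleftrightarrow> xs \<noteq> [] \<and> set xs \<subseteq> V \<and>
     (\<forall>i. Suc i < length xs \<longrightarrow> E (xs ! i) (xs ! Suc i))"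

definition reachable :: "'a set \<Rightarrow> ('a \<Rightarrow> 'a \<Rightarrow> bool) \<Rightarrow> 'a \<Rightarrow> 'a \<Rightarrow> bool" where
  "reachable V E u v \<longleftrightarrow> (\<exists>xs. walk V E xs \<and> hd xs = u \<and> last xs = v)"

definition connected_graph :: "'a set \<Rightarrow> ('a \<Rightarrow> 'a \<Rightarrow> bool) \<Rightarrow> bool" where
  "connected_graph V E \<longleftrightarrow> V \<noteq> {} \<and> (\<forall>u\<in>V. \<forall>v\<in>V. reachable V E u v)"

definition gdist :: "'a set \<Rightarrow> ('a \<Rightarrow> 'a \<Rightarrow> bool) \<Rightarrow> 'a \<Rightarrow> 'a \<Rightarrow> nat" where
  "gdist V E u v = (LEAST k. \<exists>xs. walk V E xs \<and> hd xs = u \<and> last xs = v \<and> length xs = Suc k)"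

definition dist_matrix :: "'a set \<Rightarrow> ('a \<Rightarrow> 'a \<Rightarrow> bool) \<Rightarrow> 'a \<Rightarrow> 'a \<Rightarrow> real" where
  "dist_matrix V E u v = real (gdist V E u v)"

definition is_eigenvalue :: "'a set \<Rightarrow> ('a \<Rightarrow> 'a \<Rightarrow> real) \<Rightarrow> real \<Rightarrow> bool" where
  "is_eigenvalue V M \<mu> \<longleftrightarrow> (\<exists>x :: 'a \<Rightarrow> real. (\<exists>i\<in>V. x i \<noteq> 0) \<and>
      (\<forall>i\<in>V. (\<Sum>j\<in>V. M i j * x j) = \<mu> * x i))"

text \<open>Largest eigenvalue \<lambda>_1 (the distance matrix is real symmetric, so all its
eigenvalues are real).\<close>

definition lambda1 :: "'a set \<Rightarrow> ('a \<Rightarrow> 'a \<Rightarrow> real) \<Rightarrow> real" where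
  "lambda1 V M = Max {\<mu>. is_eigenvalue V M \<mu>}"

definition distance_spectral_radius :: "'a set \<Rightarrow> ('a \<Rightarrow> 'a \<Rightarrow> bool) \<Rightarrow> real" where
  "distance_spectral_radius V E = lambda1 V (dist_matrix V E)"

definition del_vertices :: "('a \<Rightarrow> 'a \<Rightarrow> bool) \<Rightarrow> 'a set \<Rightarrow> 'a \<Rightarrow> 'a \<Rightarrow> bool" where
  "del_vertices E S u v \<longleftrightarrow> E u v \<and> u \<notin> S \<and> v \<notin> S"

definition components :: "'a set \<Rightarrow> ('a \<Rightarrow> 'a \<Rightarrow> bool) \<Rightarrow> 'a set set" where
  "components V E = (\<lambda>v. {u \<in> V. reachable V E v u}) ` V"

definition num_isolated :: "'a set \<Rightarrow> ('a \<Rightarrow> 'a \<Rightarrow> bool) \<Rightarrow> nat" where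
  "num_isolated V E = card {C \<in> components V E. card C = 1}"

definition num_odd_nontrivial :: "'a set \<Rightarrow> ('a \<Rightarrow> 'a \<Rightarrow> bool) \<Rightarrow> nat" where
  "num_odd_nontrivial V E = card {C \<in> components V E. odd (card C) \<and> card C \<ge> 3}"

text \<open>The quantity maximised in the k-Berge--Tutte formula for a given S.\<close>

definition bt_value :: "nat \<Rightarrow> 'a set \<Rightarrow> ('a \<Rightarrow> 'a \<Rightarrow> bool) \<Rightarrow> 'a set \<Rightarrow> int" where
  "bt_value k V E S =
     (if even k
      then int k * int (num_isolated (V - S) (del_vertices E S)) - int k * int (card S)
      else int (num_odd_nontrivial (V - S) (del_vertices E S))
           + int k * int (num_isolated (V - S) (del_vertices E S)) - int k * int (card S))"

definition def_k :: "nat \<Rightarrow> 'a set \<Rightarrow> ('a \<Rightarrow> 'a \<Rightarrow> bool) \<Rightarrow> int" where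
  "def_k k V E = Max (bt_value k V E ` Pow V)"

definition k_barrier :: "nat \<Rightarrow> 'a set \<Rightarrow> ('a \<Rightarrow> 'a \<Rightarrow> bool) \<Rightarrow> 'a set \<Rightarrow> bool" where
  "k_barrier k V E S \<longleftrightarrow> S \<subseteq> V \<and> bt_value k V E S = def_k k V E"

definition GFC :: "nat \<Rightarrow> 'a set \<Rightarrow> ('a \<Rightarrow> 'a \<Rightarrow> bool) \<Rightarrow> bool" where
  "GFC k V E \<longleftrightarrow> connected_graph V E \<and> odd (card V) \<and>
     \<not> (\<exists>S. S \<noteq> {} \<and> k_barrier k V E S)"

definition graph_iso :: "'a set \<Rightarrow> ('a \<Rightarrow> 'a \<Rightarrow> bool) \<Rightarrow> 'b set \<Rightarrow> ('b \<Rightarrow> 'b \<Rightarrow> bool) \<Rightarrow> bool" where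
  "graph_iso V E W F \<longleftrightarrow> (\<exists>f. bij_betw f V W \<and> (\<forall>u\<in>V. \<forall>v\<in>V. E u v \<longleftrightarrow> F (f u) (f v)))"

text \<open>K_1 \<or> (K_{n-2} \<union> K_1) on vertex set {0..<n}: vertex 0 is the joined K_1,
vertices 1..n-2 form K_{n-2}, vertex n-1 is the other K_1.\<close>

definition special_graph :: "nat \<Rightarrow> nat \<Rightarrow> nat \<Rightarrow> bool" where
  "special_graph n u v \<longleftrightarrow> u < n \<and> v < n \<and> u \<noteq> v \<and>
     (u = 0 \<or> v = 0 \<or> (1 \<le> u \<and> u \<le> n - 2 \<and> 1 \<le> v \<and> v \<le> n - 2))"

end

theory Submission
  imports Defs "HOL-Analysis.Analysis" "Jordan_Normal_Form.Char_Poly"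
begin


definition quadf :: "'a set \<Rightarrow> ('a \<Rightarrow> 'a \<Rightarrow> real) \<Rightarrow> ('a \<Rightarrow> real) \<Rightarrow> real" where
  "quadf V M x = (\<Sum>i\<in>V. \<Sum>j\<in>V. M i j * x i * x j)"

definition nsq :: "'a set \<Rightarrow> ('a \<Rightarrow> real) \<Rightarrow> real" where
  "nsq V x = (\<Sum>i\<in>V. (x i)^2)"

lemma eig_finite:
  assumes V: "finite V"
  shows "finite {\<mu>. is_eigenvalue V M \<mu>}"
proof -
  obtain f where f: "bij_betw f {0..<card V} V" using ex_bij_betw_nat_finite[OF V] by blast
  define n where "n = card V"
  define A :: "real mat" where "A = mat n n (\<lambda>(i,j). M (f i) (f j))"
  have A: "A \<in> carrier_mat n n" unfolding A_def by simp
  have sub: "{\<mu>. is_eigenvalue V M \<mu>} \<subseteq> {\<mu>. poly (char_poly A) \<mu> = 0}"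
  proof
    fix \<mu> assume "\<mu> \<in> {\<mu>. is_eigenvalue V M \<mu>}"
    then obtain x where x0: "\<exists>i\<in>V. x i \<noteq> 0" and ev: "\<forall>i\<in>V. (\<Sum>j\<in>V. M i j * x j) = \<mu> * x i"
      unfolding is_eigenvalue_def by blast
    define v :: "real vec" where "v = Matrix.vec n (\<lambda>i. x (f i))"
    have vc: "v \<in> carrier_vec n" unfolding v_def by simp
    have vnz: "v \<noteq> 0\<^sub>v n"
    proof
      assume h: "v = 0\<^sub>v n"
      from x0 obtain i where i: "i \<in> V" "x i \<noteq> 0" by blast
      obtain j where j: "j < n" "f j = i" using f i(1) unfolding n_def bij_betw_def by (metis atLeastLessThan_iff imageE)
      have "v $ j = 0" using h j by simp
      then show False using j i unfolding v_def by simp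
    qed
    have "A *\<^sub>v v = \<mu> \<cdot>\<^sub>v v"
    proof (rule eq_vecI)
      fix i assume i: "i < dim_vec (\<mu> \<cdot>\<^sub>v v)"
      then have i': "i < n" unfolding v_def by simp
      have "(A *\<^sub>v v) $ i = (\<Sum>j = 0..<n. M (f i) (f j) * x (f j))"
        using i' unfolding A_def v_def mult_mat_vec_def scalar_prod_def by simp
      also have "\<dots> = (\<Sum>u\<in>V. M (f i) u * x u)"
        using sum.reindex_bij_betw[OF f, of "\<lambda>u. M (f i) u * x u"] unfolding n_def by simp
      also have "\<dots> = \<mu> * x (f i)" using ev f i' unfolding bij_betw_def n_def by auto
      finally show "(A *\<^sub>v v) $ i = (\<mu> \<cdot>\<^sub>v v) $ i" using i' unfolding v_def by simp
    qed (simp add: A_def v_def)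
    then have "eigenvalue A \<mu>" unfolding eigenvalue_def eigenvector_def using vc vnz A by auto
    then show "\<mu> \<in> {\<mu>. poly (char_poly A) \<mu> = 0}" using eigenvalue_root_char_poly[OF A] by simp
  qed
  have "char_poly A \<noteq> 0" using degree_monic_char_poly[OF A] by auto
  then show ?thesis using poly_roots_finite finite_subset[OF sub] by blast
qed


lemma quad_poly_zero:
  fixes L Q :: real
  assumes "\<forall>t. 2*t*L + t^2*Q \<le> 0"
  shows "L = 0"
proof (rule ccontr)
  assume L: "L \<noteq> 0"
  obtain A where A: "A = \<bar>Q\<bar>" "A \<ge> 0" by simp
  define t where "t = L / (A + 1)"
  have pos: "A + 1 > 0" using A by simp
  have "2*t*L + t^2*Q \<ge> 2*t*L - t^2*A"
  proof -
    have "t^2 * Q \<ge> - (t^2 * \<bar>Q\<bar>)"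
      using abs_ge_minus_self[of "t^2*Q"] by (simp add: abs_mult)
    then show ?thesis using A by simp
  qed
  moreover have "2*t*L - t^2*A > 0"
  proof -
    have tA: "t*(A+1) = L" unfolding t_def using pos by simp
    have "(A+1)^2*(2*t*L - t^2*A) = 2*(A+1)*(t*(A+1))*L - (t*(A+1))^2*A"
      by (simp add: algebra_simps power2_eq_square)
    also have "\<dots> = L^2*(A+2)" unfolding tA by (simp add: algebra_simps power2_eq_square)
    finally have e: "(A+1)^2*(2*t*L - t^2*A) = L^2*(A+2)" .
    have "L^2*(A+2) > 0" using L A by simp
    then have "(A+1)^2*(2*t*L - t^2*A) > 0" using e by simp
    then show ?thesis using pos by (simp add: zero_less_mult_iff)
  qed
  ultimately show False using assms by (metis less_le_trans not_le)
qed

lemma quadf_update: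
  assumes V: "finite V" and i: "i \<in> V" and sym: "\<forall>a\<in>V. \<forall>b\<in>V. M a b = M b a"
  shows "quadf V M (\<lambda>j. x j + (if j = i then t else 0)) =
         quadf V M x + 2*t*(\<Sum>j\<in>V. M i j * x j) + t^2 * M i i"
proof -
  let ?d = "\<lambda>j. (if j = i then t else 0)"
  have e: "\<And>k j. M k j * (x k + ?d k) * (x j + ?d j) =
        M k j * x k * x j + M k j * ?d k * x j + M k j * x k * ?d j + M k j * ?d k * ?d j"
    by (simp add: algebra_simps)
  have s1: "(\<Sum>k\<in>V. \<Sum>j\<in>V. M k j * ?d k * x j) = t * (\<Sum>j\<in>V. M i j * x j)"
  proof -
    have "(\<Sum>k\<in>V. \<Sum>j\<in>V. M k j * ?d k * x j) = (\<Sum>k\<in>V. if k = i then (\<Sum>j\<in>V. M i j * t * x j) else 0)"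
      by (rule sum.cong) auto
    also have "\<dots> = (\<Sum>j\<in>V. M i j * t * x j)" using V i by simp
    finally show ?thesis by (simp add: sum_distrib_left algebra_simps)
  qed
  have s2: "(\<Sum>k\<in>V. \<Sum>j\<in>V. M k j * x k * ?d j) = t * (\<Sum>j\<in>V. M i j * x j)"
  proof -
    have "(\<Sum>k\<in>V. \<Sum>j\<in>V. M k j * x k * ?d j) = (\<Sum>k\<in>V. M k i * x k * t)"
      by (rule sum.cong) (auto simp: V i if_distrib cong: if_cong)
    also have "\<dots> = (\<Sum>k\<in>V. M i k * x k * t)" using sym i by (intro sum.cong) auto
    finally show ?thesis by (simp add: sum_distrib_left algebra_simps)
  qed
  have s3: "(\<Sum>k\<in>V. \<Sum>j\<in>V. M k j * ?d k * ?d j) = t^2 * M i i"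
  proof -
    have "(\<Sum>k\<in>V. \<Sum>j\<in>V. M k j * ?d k * ?d j) = (\<Sum>k\<in>V. if k = i then M i i * t * t else 0)"
      by (rule sum.cong) (auto simp: V i if_distrib cong: if_cong)
    also have "\<dots> = M i i * t * t" using V i by simp
    finally show ?thesis by (simp add: power2_eq_square algebra_simps)
  qed
  show ?thesis unfolding quadf_def
    by (simp only: e sum.distrib s1 s2 s3)
qed

lemma nsq_update:
  assumes V: "finite V" and i: "i \<in> V"
  shows "nsq V (\<lambda>j. x j + (if j = i then t else 0)) = nsq V x + 2*t*x i + t^2"
proof -
  have "nsq V (\<lambda>j. x j + (if j = i then t else 0)) = (\<Sum>j\<in>V. (x j)^2 + (if j = i then 2*t*x i + t^2 else 0))"
    unfolding nsq_def by (rule sum.cong) (auto simp: power2_eq_square algebra_simps)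
  also have "\<dots> = nsq V x + 2*t*x i + t^2" using V i by (simp add: sum.distrib nsq_def)
  finally show ?thesis .
qed

lemma lagrange:
  assumes V: "finite V" and sym: "\<forall>a\<in>V. \<forall>b\<in>V. M a b = M b a"
    and ub: "\<forall>z. quadf V M z \<le> \<mu> * nsq V z" and eq: "quadf V M x = \<mu> * nsq V x"
  shows "\<forall>i\<in>V. (\<Sum>j\<in>V. M i j * x j) = \<mu> * x i"
proof
  fix i assume i: "i \<in> V"
  have "\<forall>t. 2*t*((\<Sum>j\<in>V. M i j * x j) - \<mu> * x i) + t^2*(M i i - \<mu>) \<le> 0"
  proof
    fix t
    have "quadf V M (\<lambda>j. x j + (if j = i then t else 0)) \<le> \<mu> * nsq V (\<lambda>j. x j + (if j = i then t else 0))"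
      using ub by blast
    then have "quadf V M x + 2*t*(\<Sum>j\<in>V. M i j * x j) + t^2 * M i i \<le> \<mu> * (nsq V x + 2*t*x i + t^2)"
      by (simp only: quadf_update[OF V i sym] nsq_update[OF V i])
    then show "2*t*((\<Sum>j\<in>V. M i j * x j) - \<mu> * x i) + t^2*(M i i - \<mu>) \<le> 0"
      using eq by (simp add: algebra_simps)
  qed
  then show "(\<Sum>j\<in>V. M i j * x j) = \<mu> * x i" using quad_poly_zero by fastforce
qed


lemma quadf_cong: "(\<And>i. i \<in> V \<Longrightarrow> x i = y i) \<Longrightarrow> quadf V M x = quadf V M y"
  unfolding quadf_def by (intro sum.cong refl) auto
lemma nsq_cong: "(\<And>i. i \<in> V \<Longrightarrow> x i = y i) \<Longrightarrow> nsq V x = nsq V y"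
  unfolding nsq_def by (intro sum.cong refl) auto

lemma quadf_scale: "quadf V M (\<lambda>i. c * x i) = c^2 * quadf V M x"
  unfolding quadf_def by (simp add: sum_distrib_left power2_eq_square algebra_simps)
lemma nsq_scale: "nsq V (\<lambda>i. c * x i) = c^2 * nsq V x"
  unfolding nsq_def by (simp add: sum_distrib_left power2_eq_square algebra_simps)

lemma rayleigh_max:
  assumes V: "finite V" "V \<noteq> {}"
  shows "\<exists>\<mu>. (\<forall>z. quadf V M z \<le> \<mu> * nsq V z) \<and> (\<exists>x. nsq V x = 1 \<and> quadf V M x = \<mu>)"
proof -
  define S :: "'a \<Rightarrow> real set" where "S = (\<lambda>i. if i \<in> V then {-1..1} else {0})"
  define K where "K = PiE UNIV S"
  have "compactin (product_topology (\<lambda>i. euclidean) UNIV) K"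
    unfolding K_def by (subst compactin_PiE) (auto simp: S_def compactin_euclidean_iff)
  then have cK: "compact K" by (simp add: euclidean_product_topology compactin_euclidean_iff)
  have cl: "closed {x::'a\<Rightarrow>real. nsq V x = 1}"
    unfolding nsq_def by (intro closed_Collect_eq continuous_intros continuous_on_product_coordinates)
  define Sph where "Sph = K \<inter> {x. nsq V x = 1}"
  have cS: "compact Sph" unfolding Sph_def using cK cl by (rule compact_Int_closed)
  obtain v0 where v0: "v0 \<in> V" using V by blast
  have "nsq V (\<lambda>i. if i = v0 then 1 else 0) = (\<Sum>i\<in>V. if i = v0 then 1 else 0)"
    unfolding nsq_def by (rule sum.cong) auto
  also have "\<dots> = 1" using v0 V by simp
  finally have "nsq V (\<lambda>i. if i = v0 then 1 else 0) = 1" .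
  then have "(\<lambda>i. if i = v0 then 1 else 0) \<in> Sph"
    unfolding Sph_def K_def S_def using v0 by (auto simp: PiE_UNIV_domain Pi_def)
  then have ne: "Sph \<noteq> {}" by blast
  have cont: "continuous_on Sph (quadf V M)"
    unfolding quadf_def by (intro continuous_intros continuous_on_subset[OF continuous_on_product_coordinates subset_UNIV])
  obtain xm where xm: "xm \<in> Sph" "\<forall>y\<in>Sph. quadf V M y \<le> quadf V M xm"
    using continuous_attains_sup[OF cS ne cont] by blast
  define \<mu> where "\<mu> = quadf V M xm"
  have ub: "quadf V M z \<le> \<mu> * nsq V z" for z
  proof (cases "nsq V z = 0")
    case True
    then have "\<forall>i\<in>V. (z i)^2 = 0" unfolding nsq_def using V(1) by (subst (asm) sum_nonneg_eq_0_iff) auto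
    then have "quadf V M z = quadf V M (\<lambda>i. 0 * z i)" by (intro quadf_cong) auto
    then show ?thesis using True by (simp add: quadf_scale quadf_def)
  next
    case False
    have "nsq V z \<ge> 0" unfolding nsq_def by (simp add: sum_nonneg)
    then have Np: "nsq V z > 0" using False by linarith
    define c where "c = 1 / sqrt (nsq V z)"
    have cpos: "c > 0" using Np unfolding c_def by simp
    have c2: "c^2 = 1 / nsq V z" unfolding c_def using Np by (simp add: power_divide)
    define z' where "z' = (\<lambda>i. if i \<in> V then c * z i else 0)"
    have nz': "nsq V z' = 1"
    proof -
      have "nsq V z' = nsq V (\<lambda>i. c * z i)" by (intro nsq_cong) (simp add: z'_def)
      also have "\<dots> = 1" using c2 Np by (simp add: nsq_scale)
      finally show ?thesis .
    qed
    have "z' \<in> K"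
    proof -
      have "\<bar>c * z i\<bar> \<le> 1" if i: "i \<in> V" for i
      proof -
        have "(z i)^2 \<le> nsq V z" unfolding nsq_def using V(1) i by (intro member_le_sum) auto
        then have "c^2 * (z i)^2 \<le> c^2 * nsq V z" by (rule mult_left_mono) simp
        then have "(c * z i)^2 \<le> 1" using c2 Np by (simp add: power_mult_distrib)
        then show ?thesis using abs_le_square_iff[of "c * z i" 1] by simp
      qed
      then show ?thesis unfolding K_def S_def z'_def by (auto simp: PiE_UNIV_domain Pi_def abs_le_iff)
    qed
    then have "z' \<in> Sph" using nz' unfolding Sph_def by simp
    then have "quadf V M z' \<le> \<mu>" using xm unfolding \<mu>_def by blast
    moreover have "quadf V M z' = c^2 * quadf V M z"
    proof -
      have "quadf V M z' = quadf V M (\<lambda>i. c * z i)" by (intro quadf_cong) (simp add: z'_def)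
      then show ?thesis by (simp add: quadf_scale)
    qed
    ultimately have "quadf V M z / nsq V z \<le> \<mu>" using c2 by simp
    then show ?thesis using Np by (simp add: divide_le_eq mult.commute)
  qed
  have "nsq V xm = 1" using xm(1) unfolding Sph_def by simp
  then show ?thesis using ub unfolding \<mu>_def by blast
qed


lemma quadf_eigen:
  assumes "\<forall>i\<in>V. (\<Sum>j\<in>V. M i j * z j) = \<nu> * z i"
  shows "quadf V M z = \<nu> * nsq V z"
proof -
  have "quadf V M z = (\<Sum>i\<in>V. z i * (\<Sum>j\<in>V. M i j * z j))"
    unfolding quadf_def by (simp add: sum_distrib_left algebra_simps)
  also have "\<dots> = (\<Sum>i\<in>V. \<nu> * (z i)^2)" using assms by (intro sum.cong) (auto simp: power2_eq_square)
  finally show ?thesis by (simp add: nsq_def sum_distrib_left)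
qed

lemma nsq_pos: assumes "finite V" "\<exists>i\<in>V. z i \<noteq> 0" shows "nsq V z > 0"
proof -
  obtain i where i: "i \<in> V" "z i \<noteq> 0" using assms by blast
  have "(z i)^2 \<le> nsq V z" unfolding nsq_def using assms(1) i by (intro member_le_sum) auto
  moreover have "(z i)^2 > 0" using i by simp
  ultimately show ?thesis by linarith
qed


lemma lambda1_props:
  assumes V: "finite V" "V \<noteq> {}" and sym: "\<forall>a\<in>V. \<forall>b\<in>V. M a b = M b a"
  shows "\<forall>z. quadf V M z \<le> lambda1 V M * nsq V z"
    and "(\<forall>i\<in>V. \<forall>j\<in>V. M i j \<ge> 0) \<Longrightarrow>
          \<exists>x. (\<forall>i. x i \<ge> 0) \<and> nsq V x = 1 \<and> (\<forall>i\<in>V. (\<Sum>j\<in>V. M i j * x j) = lambda1 V M * x i)"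
proof -
  obtain \<mu> x where ub: "\<forall>z. quadf V M z \<le> \<mu> * nsq V z" and x: "nsq V x = 1" "quadf V M x = \<mu>"
    using rayleigh_max[OF V] by blast
  have xe: "quadf V M x = \<mu> * nsq V x" using x by simp
  have ev: "\<forall>i\<in>V. (\<Sum>j\<in>V. M i j * x j) = \<mu> * x i"
    by (rule lagrange[OF V(1) sym ub xe])
  have xnz: "\<exists>i\<in>V. x i \<noteq> 0"
  proof (rule ccontr)
    assume "\<not> ?thesis"
    then have "nsq V x = 0" unfolding nsq_def by simp
    then show False using x by simp
  qed
  have inA: "\<mu> \<in> {\<nu>. is_eigenvalue V M \<nu>}" unfolding is_eigenvalue_def using xnz ev by blast
  have le: "\<nu> \<le> \<mu>" if "\<nu> \<in> {\<nu>. is_eigenvalue V M \<nu>}" for \<nu>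
  proof -
    have "is_eigenvalue V M \<nu>" using that by simp
    then obtain z where zz: "(\<exists>i\<in>V. z i \<noteq> 0) \<and> (\<forall>i\<in>V. (\<Sum>j\<in>V. M i j * z j) = \<nu> * z i)"
      unfolding is_eigenvalue_def by (rule exE)
    then have z: "\<exists>i\<in>V. z i \<noteq> 0" "\<forall>i\<in>V. (\<Sum>j\<in>V. M i j * z j) = \<nu> * z i" by auto
    have "quadf V M z = \<nu> * nsq V z" by (rule quadf_eigen[OF z(2)])
    moreover have "quadf V M z \<le> \<mu> * nsq V z" using spec[OF ub, of z] .
    ultimately have "\<nu> * nsq V z \<le> \<mu> * nsq V z" by simp
    moreover have "nsq V z > 0" by (rule nsq_pos[OF V(1) z(1)])
    ultimately show ?thesis using mult_le_cancel_right_pos by blast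
  qed
  have l: "lambda1 V M = \<mu>" unfolding lambda1_def
    by (rule Max_eqI[OF eig_finite[OF V(1)]]) (use le inA in auto)
  show "\<forall>z. quadf V M z \<le> lambda1 V M * nsq V z" unfolding l by (rule ub)
  assume nn: "\<forall>i\<in>V. \<forall>j\<in>V. M i j \<ge> 0"
  define y where "y = (\<lambda>i. \<bar>x i\<bar>)"
  have "nsq V y = nsq V x" unfolding nsq_def y_def by simp
  then have ny: "nsq V y = 1" using x by simp
  have "quadf V M x \<le> quadf V M y"
    unfolding quadf_def y_def
  proof (intro sum_mono)
    fix i j assume "i \<in> V" "j \<in> V"
    then have "M i j \<ge> 0" using nn by blast
    moreover have "x i * x j \<le> \<bar>x i\<bar> * \<bar>x j\<bar>" using abs_ge_self[of "x i * x j"] by (simp add: abs_mult)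
    ultimately have "M i j * (x i * x j) \<le> M i j * (\<bar>x i\<bar> * \<bar>x j\<bar>)"
      by (rule mult_left_mono[rotated])
    then show "M i j * x i * x j \<le> M i j * \<bar>x i\<bar> * \<bar>x j\<bar>" by (simp add: mult.assoc)
  qed
  then have g1: "\<mu> \<le> quadf V M y" using x by simp
  have "quadf V M y \<le> \<mu> * nsq V y" using spec[OF ub, of y] .
  then have g2: "quadf V M y \<le> \<mu>" using ny by simp
  from g1 g2 have "quadf V M y = \<mu>" by linarith
  then have ye: "quadf V M y = \<mu> * nsq V y" using ny by simp
  have "\<forall>i\<in>V. (\<Sum>j\<in>V. M i j * y j) = \<mu> * y i" by (rule lagrange[OF V(1) sym ub ye])
  moreover have "\<forall>i. y i \<ge> 0" unfolding y_def by simp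
  ultimately show "\<exists>x. (\<forall>i. x i \<ge> 0) \<and> nsq V x = 1 \<and> (\<forall>i\<in>V. (\<Sum>j\<in>V. M i j * x j) = lambda1 V M * x i)"
    using ny l by blast
qed


lemma walk_rev:
  assumes sym: "\<forall>u v. E u v \<longrightarrow> E v u" and w: "walk V E xs"
  shows "walk V E (rev xs)"
  unfolding walk_def
proof (intro conjI allI impI)
  show "rev xs \<noteq> []" using w unfolding walk_def by simp
  show "set (rev xs) \<subseteq> V" using w unfolding walk_def by simp
  fix i assume i: "Suc i < length (rev xs)"
  let ?m = "length xs"
  have a: "rev xs ! i = xs ! (?m - Suc i)" using i by (simp add: rev_nth)
  have b: "rev xs ! Suc i = xs ! (?m - Suc (Suc i))" using i by (simp add: rev_nth)
  have c: "?m - Suc i = Suc (?m - Suc (Suc i))" using i by simp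
  have "Suc (?m - Suc (Suc i)) < ?m" using i by simp
  then have "E (xs ! (?m - Suc (Suc i))) (xs ! Suc (?m - Suc (Suc i)))"
    using w unfolding walk_def by blast
  then have "E (xs ! Suc (?m - Suc (Suc i))) (xs ! (?m - Suc (Suc i)))" using sym by blast
  then show "E (rev xs ! i) (rev xs ! Suc i)" unfolding a b c[symmetric] .
qed

lemma walk_append:
  assumes "walk V E xs" "walk V E ys" "last xs = hd ys"
  shows "walk V E (xs @ tl ys)"
  unfolding walk_def
proof (intro conjI allI impI)
  show "xs @ tl ys \<noteq> []" using assms unfolding walk_def by simp
  show "set (xs @ tl ys) \<subseteq> V" using assms unfolding walk_def by (auto dest: list.set_sel(2))
  fix i assume i: "Suc i < length (xs @ tl ys)"
  show "E ((xs @ tl ys) ! i) ((xs @ tl ys) ! Suc i)"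
  proof (cases "Suc i < length xs")
    case True
    then show ?thesis using assms(1) unfolding walk_def by (simp add: nth_append)
  next
    case False
    have ys: "ys \<noteq> []" using assms(2) unfolding walk_def by simp
    define j where "j = i + 1 - length xs"
    have xs: "xs \<noteq> []" using assms(1) unfolding walk_def by simp
    have hj: "Suc j < length ys" using i False xs ys unfolding j_def by auto
    have "(xs @ tl ys) ! i = ys ! j"
    proof (cases "i < length xs")
      case True
      then have "i = length xs - 1" using False by simp
      then have "(xs @ tl ys) ! i = last xs" using xs by (simp add: nth_append last_conv_nth)
      also have "\<dots> = ys ! 0" using assms(3) ys by (simp add: hd_conv_nth)
      finally show ?thesis using \<open>i = length xs - 1\<close> xs unfolding j_def by simp
    next
      case False
      then show ?thesis using ys unfolding j_def by (cases ys) (auto simp: nth_append Suc_diff_le)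
    qed
    moreover have "(xs @ tl ys) ! Suc i = ys ! Suc j"
      using False ys unfolding j_def by (cases ys) (auto simp: nth_append)
    ultimately show ?thesis using assms(2) hj unfolding walk_def by simp
  qed
qed

lemma reachable_refl: "v \<in> V \<Longrightarrow> reachable V E v v"
  unfolding reachable_def by (rule exI[of _ "[v]"]) (simp add: walk_def)

lemma reachable_edge: "u \<in> V \<Longrightarrow> w \<in> V \<Longrightarrow> E u w \<Longrightarrow> reachable V E u w"
  unfolding reachable_def
  by (rule exI[of _ "[u,w]"]) (auto simp: walk_def less_Suc_eq)

lemma reachable_sym:
  "\<forall>u v. E u v \<longrightarrow> E v u \<Longrightarrow> reachable V E u w \<Longrightarrow> reachable V E w u"
proof -
  assume sym: "\<forall>u v. E u v \<longrightarrow> E v u" and "reachable V E u w"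
  then obtain xs where xs: "walk V E xs" "hd xs = u" "last xs = w" unfolding reachable_def by blast
  have "walk V E (rev xs)" using walk_rev[OF sym xs(1)] .
  moreover have "hd (rev xs) = w" "last (rev xs) = u" using xs by (auto simp: hd_rev last_rev)
  ultimately show ?thesis unfolding reachable_def by blast
qed

lemma reachable_trans:
  "reachable V E u v \<Longrightarrow> reachable V E v w \<Longrightarrow> reachable V E u w"
proof -
  assume "reachable V E u v" "reachable V E v w"
  then obtain xs ys where xs: "walk V E xs" "hd xs = u" "last xs = v"
    and ys: "walk V E ys" "hd ys = v" "last ys = w" unfolding reachable_def by blast
  have w: "walk V E (xs @ tl ys)" using walk_append[OF xs(1) ys(1)] xs(3) ys(2) by simp
  have "hd (xs @ tl ys) = u" using xs unfolding walk_def by simp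
  moreover have "last (xs @ tl ys) = w"
  proof (cases "tl ys = []")
    case True
    have "ys \<noteq> []" using ys(1) unfolding walk_def by simp
    then have "ys = [hd ys]" using True by (cases ys) auto
    then have "w = v" using ys by (metis last_ConsL)
    then show ?thesis using True xs by simp
  next
    case False
    then have "last (tl ys) = last ys" by (cases ys) auto
    then show ?thesis using ys False by simp
  qed
  ultimately show "reachable V E u w" using w unfolding reachable_def by blast
qed

lemma reachable_in: "reachable V E u v \<Longrightarrow> u \<in> V \<and> v \<in> V"
  unfolding reachable_def walk_def by (metis hd_in_set last_in_set subsetD)

lemma gdist_le:
  assumes "walk V E xs" "hd xs = u" "last xs = v" "length xs = Suc k"
  shows "gdist V E u v \<le> k"
  unfolding gdist_def using assms by (intro Least_le) blast

lemma gdist_walk: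
  assumes "reachable V E u v"
  shows "\<exists>xs. walk V E xs \<and> hd xs = u \<and> last xs = v \<and> length xs = Suc (gdist V E u v)"
proof -
  obtain xs where xs: "walk V E xs" "hd xs = u" "last xs = v" using assms unfolding reachable_def by blast
  then have "xs \<noteq> []" unfolding walk_def by simp
  then have "\<exists>k. \<exists>xs. walk V E xs \<and> hd xs = u \<and> last xs = v \<and> length xs = Suc k"
    using xs by (metis Suc_pred length_greater_0_conv)
  then show ?thesis unfolding gdist_def by (rule LeastI_ex)
qed

lemma gdist_refl: "u \<in> V \<Longrightarrow> gdist V E u u = 0"
  using gdist_le[of V E "[u]" u u 0] by (simp add: walk_def)

lemma gdist_edge: "u \<in> V \<Longrightarrow> v \<in> V \<Longrightarrow> E u v \<Longrightarrow> gdist V E u v \<le> 1"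
  using gdist_le[of V E "[u,v]" u v 1] by (auto simp: walk_def less_Suc_eq)

lemma gdist_two: "u \<in> V \<Longrightarrow> v \<in> V \<Longrightarrow> w \<in> V \<Longrightarrow> E u w \<Longrightarrow> E w v \<Longrightarrow> gdist V E u v \<le> 2"
  using gdist_le[of V E "[u,w,v]" u v 2] by (auto simp: walk_def less_Suc_eq nth_Cons')

lemma gdist_ge1:
  assumes "reachable V E u v" "u \<noteq> v"
  shows "gdist V E u v \<ge> 1"
proof (rule ccontr)
  assume "\<not> ?thesis"
  then have "gdist V E u v = 0" by simp
  then obtain xs where "walk V E xs" "hd xs = u" "last xs = v" "length xs = 1"
    using gdist_walk[OF assms(1)] by auto
  then show False using assms(2) by (cases xs) auto
qed

lemma gdist_ge2:
  assumes "reachable V E u v" "u \<noteq> v" "\<not> E u v"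
  shows "gdist V E u v \<ge> 2"
proof (rule ccontr)
  assume "\<not> ?thesis"
  then have "gdist V E u v = 1" using gdist_ge1[OF assms(1,2)] by simp
  then obtain xs where xs: "walk V E xs" "hd xs = u" "last xs = v" "length xs = 2"
    using gdist_walk[OF assms(1)] by auto
  then obtain a b where ab: "xs = [a,b]"
    by (cases xs; cases "tl xs") auto
  then have "E a b" using xs(1) unfolding walk_def by auto
  then show False using ab xs assms(3) by simp
qed

lemma gdist_sym:
  assumes sym: "\<forall>u v. E u v \<longrightarrow> E v u"
  shows "gdist V E u v = gdist V E v u"
proof -
  have "{k. \<exists>xs. walk V E xs \<and> hd xs = u \<and> last xs = v \<and> length xs = Suc k} =
        {k. \<exists>xs. walk V E xs \<and> hd xs = v \<and> last xs = u \<and> length xs = Suc k}"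
  proof -
    have "\<exists>ys. walk V E ys \<and> hd ys = b \<and> last ys = a \<and> length ys = Suc k"
      if "walk V E xs" "hd xs = a" "last xs = b" "length xs = Suc k" for xs a b k
      using that walk_rev[OF sym, of V xs]
      by (intro exI[of _ "rev xs"]) (auto simp: hd_rev last_rev)
    then show ?thesis by blast
  qed
  then have "(\<lambda>k. \<exists>xs. walk V E xs \<and> hd xs = u \<and> last xs = v \<and> length xs = Suc k) =
        (\<lambda>k. \<exists>xs. walk V E xs \<and> hd xs = v \<and> last xs = u \<and> length xs = Suc k)"
    by (simp add: set_eq_iff fun_eq_iff)
  then show ?thesis unfolding gdist_def by simp
qed


lemma comp_closed:
  assumes Fin: "\<forall>u v. F u v \<longrightarrow> u \<in> W \<and> v \<in> W"
    and C: "C \<in> Defs.components W F" and u: "u \<in> C" and e: "F u w"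
  shows "w \<in> C"
proof -
  obtain v where v: "v \<in> W" "C = {x\<in>W. reachable W F v x}" using C unfolding Defs.components_def by blast
  have "reachable W F v u" using u v by blast
  moreover have "reachable W F u w" using reachable_edge[of u W w F] Fin e by blast
  ultimately have "reachable W F v w" by (rule reachable_trans)
  then show ?thesis using v Fin e by blast
qed

lemma comp_sub: "C \<in> Defs.components W F \<Longrightarrow> C \<subseteq> W"
  unfolding Defs.components_def by blast

lemma comp_ne: "C \<in> Defs.components W F \<Longrightarrow> C \<noteq> {}"
  unfolding Defs.components_def using reachable_refl by fastforce

lemma comp_disj:
  assumes sym: "\<forall>u v. F u v \<longrightarrow> F v u"
    and C: "C \<in> Defs.components W F" and C': "C' \<in> Defs.components W F" and x: "x \<in> C" "x \<in> C'"
  shows "C = C'"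
proof -
  obtain v where v: "v \<in> W" "C = {x\<in>W. reachable W F v x}" using C unfolding Defs.components_def by blast
  obtain v' where v': "v' \<in> W" "C' = {x\<in>W. reachable W F v' x}" using C' unfolding Defs.components_def by blast
  have a: "reachable W F v x" "reachable W F v' x" using x v v' by auto
  have "reachable W F v u \<longleftrightarrow> reachable W F v' u" for u
    using a reachable_sym[OF sym] reachable_trans by metis
  then show ?thesis using v v' by auto
qed

lemma comp_noedge:
  assumes Fin: "\<forall>u v. F u v \<longrightarrow> u \<in> W \<and> v \<in> W"
    and C: "C \<in> Defs.components W F" and u: "u \<in> C" and w: "w \<notin> C"
  shows "\<not> F u w"
  using comp_closed[OF Fin C u] w by blast


lemma sum_if_neq:
  assumes "finite A" "u \<in> A"
  shows "(\<Sum>v\<in>A. if u \<noteq> v then g v else 0) = (\<Sum>v\<in>A. g v) - (g u :: real)"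
proof -
  have "(\<Sum>v\<in>A. if u \<noteq> v then g v else 0) = (\<Sum>v\<in>A. g v - (if v = u then g v else 0))"
    by (rule sum.cong) auto
  also have "\<dots> = (\<Sum>v\<in>A. g v) - (\<Sum>v\<in>A. if v = u then g v else 0)" by (simp add: sum_subtractf)
  also have "(\<Sum>v\<in>A. if v = u then g v else 0) = g u" using assms by simp
  finally show ?thesis .
qed

lemma double_offdiag:
  assumes "finite A"
  shows "(\<Sum>u\<in>A. \<Sum>v\<in>A. if u \<noteq> v then x u * x v else 0) = (\<Sum>v\<in>A. x v)^2 - (\<Sum>v\<in>A. (x v)^2 :: real)"
proof -
  have "(\<Sum>u\<in>A. \<Sum>v\<in>A. if u \<noteq> v then x u * x v else 0) = (\<Sum>u\<in>A. (\<Sum>v\<in>A. x u * x v) - x u * x u)"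
    using assms by (intro sum.cong refl) (rule sum_if_neq)
  also have "\<dots> = (\<Sum>u\<in>A. \<Sum>v\<in>A. x u * x v) - (\<Sum>u\<in>A. (x u)^2)"
    by (simp add: sum_subtractf power2_eq_square)
  also have "(\<Sum>u\<in>A. \<Sum>v\<in>A. x u * x v) = (\<Sum>v\<in>A. x v)^2"
    by (simp add: power2_eq_square sum_product)
  finally show ?thesis .
qed

lemma sum_pairs_double:
  assumes "finite A" "finite B" "Q \<subseteq> A \<times> B"
  shows "(\<Sum>p\<in>Q. f p) = (\<Sum>u\<in>A. \<Sum>v\<in>B. if (u,v) \<in> Q then f (u,v) else 0)"
proof -
  have "(\<Sum>u\<in>A. \<Sum>v\<in>B. if (u,v) \<in> Q then f (u,v) else 0) = (\<Sum>(u,v)\<in>A \<times> B. if (u,v) \<in> Q then f (u,v) else 0)"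
    by (rule sum.cartesian_product)
  also have "\<dots> = (\<Sum>p\<in>A \<times> B. if p \<in> Q then f p else 0)"
    by (rule sum.cong) auto
  also have "\<dots> = (\<Sum>p\<in>(A \<times> B) \<inter> Q. f p)" using assms by (simp add: sum.inter_restrict)
  also have "(A \<times> B) \<inter> Q = Q" using assms by blast
  finally show ?thesis by simp
qed

lemma sum_offdiag:
  assumes "finite A"
  shows "(\<Sum>p\<in>{(u,v). u \<in> A \<and> v \<in> A \<and> u \<noteq> v}. x (fst p) * x (snd p)) = (\<Sum>v\<in>A. x v)^2 - (\<Sum>v\<in>A. (x v)^2 :: real)"
proof -
  have "(\<Sum>p\<in>{(u,v). u \<in> A \<and> v \<in> A \<and> u \<noteq> v}. x (fst p) * x (snd p)) =
     (\<Sum>u\<in>A. \<Sum>v\<in>A. if (u,v) \<in> {(u,v). u \<in> A \<and> v \<in> A \<and> u \<noteq> v} then (\<lambda>p. x (fst p) * x (snd p)) (u,v) else 0)"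
    by (rule sum_pairs_double) (use assms in auto)
  also have "\<dots> = (\<Sum>u\<in>A. \<Sum>v\<in>A. if u \<noteq> v then x u * x v else 0)"
    by (intro sum.cong refl) auto
  finally show ?thesis using double_offdiag[OF assms] by simp
qed

lemma sum_cross:
  "(\<Sum>p\<in>A \<times> B. x (fst p) * x (snd p)) = (\<Sum>v\<in>A. x v) * (\<Sum>v\<in>B. (x v :: real))"
  by (simp add: sum_product sum.cartesian_product case_prod_beta')

lemma quad_lb:
  assumes sg: "simple_graph V E" and conn: "connected_graph V E" and nn: "\<forall>v. x v \<ge> 0"
    and Q: "Q \<subseteq> {(u,v). u \<in> V \<and> v \<in> V \<and> u \<noteq> v \<and> \<not> E u v}"
  shows "quadf V (dist_matrix V E) x \<ge> (\<Sum>v\<in>V. x v)^2 - nsq V x + (\<Sum>p\<in>Q. x (fst p) * x (snd p))"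
proof -
  have fin: "finite V" using sg unfolding simple_graph_def by simp
  have D: "dist_matrix V E u v \<ge> (if u \<noteq> v then 1 else 0) + (if (u,v) \<in> Q then 1 else 0)"
    if uv: "u \<in> V" "v \<in> V" for u v
  proof (cases "u = v")
    case True
    then show ?thesis using Q unfolding dist_matrix_def by auto
  next
    case False
    have r: "reachable V E u v" using conn uv unfolding connected_graph_def by blast
    show ?thesis
    proof (cases "(u,v) \<in> Q")
      case True
      then have "\<not> E u v" using Q by blast
      then show ?thesis using gdist_ge2[OF r False] False True unfolding dist_matrix_def by simp
    next
      case F2: False
      then show ?thesis using gdist_ge1[OF r False] False unfolding dist_matrix_def by simp
    qed
  qed
  have "quadf V (dist_matrix V E) x \<ge>
      (\<Sum>u\<in>V. \<Sum>v\<in>V. ((if u \<noteq> v then 1 else 0) + (if (u,v) \<in> Q then 1 else 0)) * x u * x v)"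
    unfolding quadf_def
  proof (intro sum_mono)
    fix u v assume "u \<in> V" "v \<in> V"
    then have "dist_matrix V E u v \<ge> (if u \<noteq> v then 1 else 0) + (if (u,v) \<in> Q then 1 else 0)" by (rule D)
    moreover have "x u * x v \<ge> 0" using nn by simp
    ultimately have "((if u \<noteq> v then 1 else 0) + (if (u,v) \<in> Q then 1 else 0)) * (x u * x v) \<le> dist_matrix V E u v * (x u * x v)"
      by (rule mult_right_mono)
    then show "((if u \<noteq> v then 1 else 0) + (if (u,v) \<in> Q then 1 else 0)) * x u * x v \<le> dist_matrix V E u v * x u * x v"
      by (simp add: mult.assoc)
  qed
  also have "(\<Sum>u\<in>V. \<Sum>v\<in>V. ((if u \<noteq> v then 1 else 0) + (if (u,v) \<in> Q then 1 else 0)) * x u * x v) =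
      (\<Sum>u\<in>V. \<Sum>v\<in>V. if u \<noteq> v then x u * x v else 0) + (\<Sum>u\<in>V. \<Sum>v\<in>V. if (u,v) \<in> Q then x u * x v else 0)"
  proof -
    have "\<And>u v. ((if u \<noteq> v then 1 else 0) + (if (u,v) \<in> Q then 1 else 0)) * x u * x v =
       (if u \<noteq> v then x u * x v else 0) + (if (u,v) \<in> Q then x u * x v else 0)" by simp
    then show ?thesis by (simp only: sum.distrib)
  qed
  also have "(\<Sum>u\<in>V. \<Sum>v\<in>V. if u \<noteq> v then x u * x v else 0) = (\<Sum>v\<in>V. x v)^2 - nsq V x"
    unfolding nsq_def by (rule double_offdiag[OF fin])
  also have "(\<Sum>u\<in>V. \<Sum>v\<in>V. if (u,v) \<in> Q then x u * x v else 0) = (\<Sum>p\<in>Q. x (fst p) * x (snd p))"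
  proof -
    have "Q \<subseteq> V \<times> V" using Q by blast
    then show ?thesis using sum_pairs_double[OF fin fin, of Q "\<lambda>p. x (fst p) * x (snd p)"] by (simp cong: if_cong)
  qed
  finally show ?thesis by simp
qed


lemma split_range:
  assumes "n \<ge> (3::nat)"
  shows "(\<Sum>v\<in>{0..<n}. f v) = f 0 + (\<Sum>v\<in>{1..n-2}. f v) + (f (n-1) :: real)"
proof -
  have e: "{0..<n} = insert 0 (insert (n-1) {1..n-2})" using assms by auto
  have "0 \<notin> insert (n-1) {1..n-2}" "n - 1 \<notin> {1..n-2}" using assms by auto
  then show ?thesis unfolding e by (simp add: algebra_simps)
qed

lemma special_sg: "simple_graph {0..<n} (special_graph n)"
  unfolding simple_graph_def special_graph_def by auto

lemma special_conn: assumes "n \<ge> 3" shows "connected_graph {0..<n} (special_graph n)"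
proof -
  have r0: "reachable {0..<n} (special_graph n) u 0" if "u < n" for u
  proof (cases "u = 0")
    case True then show ?thesis using reachable_refl[of 0 "{0..<n}"] assms by simp
  next
    case False then show ?thesis using that assms
      by (intro reachable_edge) (auto simp: special_graph_def)
  qed
  have sym: "\<forall>u v. special_graph n u v \<longrightarrow> special_graph n v u" unfolding special_graph_def by auto
  have "reachable {0..<n} (special_graph n) u v" if "u \<in> {0..<n}" "v \<in> {0..<n}" for u v
  proof -
    have "reachable {0..<n} (special_graph n) u 0" using r0 that by simp
    moreover have "reachable {0..<n} (special_graph n) 0 v"
      using reachable_sym[OF sym r0[of v]] that by simp
    ultimately show ?thesis by (rule reachable_trans)
  qed
  moreover have "{0..<n} \<noteq> {}" using assms by simp
  ultimately show ?thesis unfolding connected_graph_def by blast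
qed

lemma special_dist:
  assumes n: "n \<ge> 3" and u: "u < n" and v: "v < n"
  shows "dist_matrix {0..<n} (special_graph n) u v = (if u = v then 0 else if special_graph n u v then 1 else 2)"
proof -
  have r: "reachable {0..<n} (special_graph n) u v" using special_conn[OF n] u v unfolding connected_graph_def by simp
  show ?thesis
  proof (cases "u = v")
    case True then show ?thesis using gdist_refl[of u "{0..<n}"] u unfolding dist_matrix_def by simp
  next
    case F: False
    show ?thesis
    proof (cases "special_graph n u v")
      case True
      have "gdist {0..<n} (special_graph n) u v \<le> 1" using gdist_edge[of u "{0..<n}" v "special_graph n"] u v True by simp
      then have "gdist {0..<n} (special_graph n) u v = 1" using gdist_ge1[OF r F] by simp
      then show ?thesis using F True unfolding dist_matrix_def by simp
    next
      case False
      then have "u \<noteq> 0" "v \<noteq> 0" using F u v unfolding special_graph_def by auto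
      then have "special_graph n u 0" "special_graph n 0 v" using u v unfolding special_graph_def by auto
      then have "gdist {0..<n} (special_graph n) u v \<le> 2" using gdist_two[of u "{0..<n}" v 0] u v n by simp
      then show ?thesis using gdist_ge2[OF r F False] F False unfolding dist_matrix_def by simp
    qed
  qed
qed

lemma sp_row0: "n \<ge> 3 \<Longrightarrow> j < n \<Longrightarrow> special_graph n 0 j \<longleftrightarrow> j \<noteq> 0"
  unfolding special_graph_def by auto
lemma sp_rowr: "n \<ge> 3 \<Longrightarrow> j < n \<Longrightarrow> r \<in> {1..n-2} \<Longrightarrow> j \<noteq> r \<Longrightarrow> special_graph n r j \<longleftrightarrow> j \<noteq> n-1"
  unfolding special_graph_def by auto
lemma sp_rowl: "n \<ge> 3 \<Longrightarrow> j < n \<Longrightarrow> special_graph n (n-1) j \<longleftrightarrow> j = 0"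
  unfolding special_graph_def by auto

lemma H_facts:
  assumes n: "n \<ge> 3"
  shows "\<exists>a y b. a > 0 \<and> y > 0 \<and> b > 0 \<and> a^2 + (real n - 2)*y^2 + b^2 = 1 \<and>
     distance_spectral_radius {0..<n} (special_graph n) * a = (real n - 2)*y + b \<and>
     distance_spectral_radius {0..<n} (special_graph n) * y = a + (real n - 3)*y + 2*b \<and>
     distance_spectral_radius {0..<n} (special_graph n) * b = a + 2*(real n - 2)*y"
proof -
  let ?V = "{0..<n}" and ?E = "special_graph n"
  let ?D = "dist_matrix ?V ?E"
  define \<rho> where "\<rho> = distance_spectral_radius ?V ?E"
  have Vne: "?V \<noteq> {}" using n by auto
  have sym: "\<forall>a\<in>?V. \<forall>b\<in>?V. ?D a b = ?D b a"
    unfolding dist_matrix_def using gdist_sym[of ?E ?V] unfolding special_graph_def by auto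
  have nn: "\<forall>i\<in>?V. \<forall>j\<in>?V. ?D i j \<ge> 0" unfolding dist_matrix_def by simp
  obtain x where x0: "\<forall>i. x i \<ge> 0" and x1: "nsq ?V x = 1"
    and ev: "\<forall>i\<in>?V. (\<Sum>j\<in>?V. ?D i j * x j) = \<rho> * x i"
    using lambda1_props(2)[OF _ Vne sym nn] unfolding \<rho>_def distance_spectral_radius_def by auto
  have "quadf ?V ?D x = \<rho> * nsq ?V x" by (rule quadf_eigen[OF ev])
  moreover have "quadf ?V ?D x \<ge> 0" unfolding quadf_def using nn x0 by (intro sum_nonneg) auto
  ultimately have rho0: "\<rho> \<ge> 0" using x1 by simp
  define T where "T = (\<Sum>j\<in>?V. x j)"
  define R where "R = {1..n-2}"
  have row0: "\<rho> * x 0 = T - x 0"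
  proof -
    have "(\<Sum>j\<in>?V. ?D 0 j * x j) = (\<Sum>j\<in>?V. x j - (if j = 0 then x j else 0))"
      using n by (intro sum.cong refl) (auto simp: special_dist sp_row0)
    also have "\<dots> = T - x 0" using n by (simp add: sum_subtractf T_def)
    finally show ?thesis using ev n by simp
  qed
  have rowr: "\<rho> * x r = T - x r + x (n-1)" if r: "r \<in> R" for r
  proof -
    have "(\<Sum>j\<in>?V. ?D r j * x j) = (\<Sum>j\<in>?V. x j - (if j = r then x j else 0) + (if j = n-1 then x j else 0))"
    proof (intro sum.cong refl)
      fix j assume j: "j \<in> ?V"
      show "?D r j * x j = x j - (if j = r then x j else 0) + (if j = n-1 then x j else 0)"
      proof (cases "j = r")
        case True
        moreover have "r \<noteq> n - 1" using r n unfolding R_def by auto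
        ultimately show ?thesis using n j r unfolding R_def by (simp add: special_dist)
      next
        case False
        moreover have "r < n" "r \<noteq> n - 1" using r n unfolding R_def by auto
        ultimately show ?thesis using n j r sp_rowr[of n j r] unfolding R_def by (auto simp: special_dist)
      qed
    qed
    also have "\<dots> = T - x r + x (n-1)"
    proof -
      have "r < n" using n r unfolding R_def by auto
      then show ?thesis using n by (simp add: sum.distrib sum_subtractf T_def)
    qed
    finally have "(\<Sum>j\<in>?V. ?D r j * x j) = T - x r + x (n-1)" .
    moreover have "r \<in> ?V" using n r unfolding R_def by auto
    ultimately show ?thesis using ev by simp
  qed
  have rowl: "\<rho> * x (n-1) = T - x (n-1) + (\<Sum>j\<in>R. x j)"
  proof -
    have "(\<Sum>j\<in>?V. ?D (n-1) j * x j) = (\<Sum>j\<in>?V. x j - (if j = n-1 then x j else 0) + (if j \<in> R then x j else 0))"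
    proof (intro sum.cong refl)
      fix j assume j: "j \<in> ?V"
      have "j \<in> R \<longleftrightarrow> j \<noteq> 0 \<and> j \<noteq> n - 1" using j n unfolding R_def by auto
      then show "?D (n-1) j * x j = x j - (if j = n-1 then x j else 0) + (if j \<in> R then x j else 0)"
        using n j sp_rowl[of n j] by (auto simp: special_dist)
    qed
    also have "\<dots> = T - x (n-1) + (\<Sum>j\<in>?V. if j \<in> R then x j else 0)" using n by (simp add: sum.distrib sum_subtractf T_def)
    also have "(\<Sum>j\<in>?V. if j \<in> R then x j else 0) = (\<Sum>j\<in>R. x j)"
    proof -
      have "(\<Sum>j\<in>?V. if j \<in> R then x j else 0) = (\<Sum>j\<in>?V \<inter> R. x j)" by (simp add: sum.inter_restrict)
      moreover have "?V \<inter> R = R" unfolding R_def using n by auto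
      ultimately show ?thesis by simp
    qed
    finally show ?thesis using ev n by simp
  qed
  define a where "a = x 0"
  define y where "y = x 1"
  define b where "b = x (n-1)"
  have 1: "1 \<in> R" unfolding R_def using n by simp
  have xr: "x r = y" if "r \<in> R" for r
  proof -
    have "(\<rho> + 1) * x r = T + b" using rowr[OF that] unfolding b_def by (simp add: algebra_simps)
    moreover have "(\<rho> + 1) * y = T + b" using rowr[OF 1] unfolding b_def y_def by (simp add: algebra_simps)
    ultimately have "(\<rho> + 1) * x r = (\<rho> + 1) * y" by simp
    then show ?thesis using rho0 by simp
  qed
  have cR: "card R = n - 2" unfolding R_def by simp
  have sR: "(\<Sum>j\<in>R. x j) = (real n - 2) * y" using xr cR n by (simp add: of_nat_diff)
  have sR2: "(\<Sum>j\<in>R. (x j)^2) = (real n - 2) * y^2" using xr cR n by (simp add: of_nat_diff)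
  have T: "T = a + (real n - 2) * y + b" unfolding T_def using split_range[OF n, of x] sR
    unfolding a_def b_def R_def by simp
  have N: "a^2 + (real n - 2)*y^2 + b^2 = 1" using x1 split_range[OF n, of "\<lambda>j. (x j)^2"] sR2
    unfolding nsq_def a_def b_def R_def by simp
  have e1: "\<rho> * a = (real n - 2)*y + b" using row0 T unfolding a_def by simp
  have e2: "\<rho> * y = a + (real n - 3)*y + 2*b" using rowr[OF 1] T xr[OF 1] unfolding b_def y_def by (simp add: algebra_simps)
  have e3: "\<rho> * b = a + 2*(real n - 2)*y" using rowl T sR unfolding b_def by (simp add: algebra_simps)
  have "T > 0"
  proof -
    have "\<exists>i\<in>?V. x i \<noteq> 0"
    proof (rule ccontr)
      assume "\<not> ?thesis" then have "nsq ?V x = 0" unfolding nsq_def by simp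
      then show False using x1 by simp
    qed
    then obtain i where i: "i \<in> ?V" "x i \<noteq> 0" by blast
    have "x i \<le> T" unfolding T_def using x0 i by (intro member_le_sum) auto
    moreover have "x i > 0" using x0 i by (metis less_eq_real_def)
    ultimately show ?thesis by simp
  qed
  have apos: "a > 0"
  proof -
    have "(\<rho> + 1) * a = T" using row0 unfolding a_def by (simp add: algebra_simps)
    then have "(\<rho> + 1) * a > 0" using \<open>T > 0\<close> by simp
    moreover have "\<rho> + 1 > 0" using rho0 by simp
    ultimately show ?thesis by (simp add: zero_less_mult_iff)
  qed
  have ypos: "y > 0"
  proof -
    have "(\<rho> + 1) * y = T + b" using rowr[OF 1] xr[OF 1] unfolding b_def by (simp add: algebra_simps)
    moreover have "b \<ge> 0" unfolding b_def using x0 by simp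
    ultimately have "(\<rho> + 1) * y > 0" using \<open>T > 0\<close> by simp
    moreover have "\<rho> + 1 > 0" using rho0 by simp
    ultimately show ?thesis by (simp add: zero_less_mult_iff)
  qed
  have bpos: "b > 0"
  proof -
    have "a + 2*(real n - 2)*y > 0" using apos ypos n by (simp add: add_pos_nonneg)
    then have "\<rho> * b > 0" using e3 by simp
    moreover have "b \<ge> 0" unfolding b_def using x0 by simp
    ultimately show ?thesis using rho0 by (simp add: zero_less_mult_iff)
  qed
  show ?thesis using apos ypos bpos N e1 e2 e3 unfolding \<rho>_def by blast
qed


lemma H_scalar:
  fixes a y b \<rho> N :: real
  assumes N: "N \<ge> 3" and pos: "a > 0" "y > 0" "b > 0"
    and e1: "\<rho> * a = (N - 2)*y + b" and e2: "\<rho> * y = a + (N - 3)*y + 2*b"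
    and e3: "\<rho> * b = a + 2*(N - 2)*y"
  shows "b < 2*y" and "N \<ge> 4 \<Longrightarrow> b*(N+1) < 2*(N-1)*y"
proof -
  have s1: "(\<rho>+2)*b = (\<rho> + N - 1)*y" using e2 e3 by (simp add: algebra_simps)
  have "\<rho> * y > (N - 1) * y"
  proof -
    have q1: "(\<rho> + N - 1)*y = (\<rho>+2)*y + (N-3)*y" by (simp add: algebra_simps)
    have "(N-3)*y \<ge> 0" using N pos by simp
    then have "(\<rho>+2)*b \<ge> (\<rho>+2)*y" using s1 q1 by linarith
    moreover have "\<rho> + 2 > 0"
    proof (rule ccontr)
      assume "\<not> \<rho> + 2 > 0"
      then have "\<rho> * y \<le> -2 * y" using mult_right_mono[of \<rho> "-2" y] pos by simp
      moreover have "a + (N - 3)*y + 2*b > 0" using pos N by (simp add: add_pos_nonneg)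
      ultimately show False using e2 pos by linarith
    qed
    ultimately have "b \<ge> y" by simp
    then show ?thesis using e2 pos by (simp add: algebra_simps)
  qed
  then have rho: "\<rho> > N - 1" using pos by simp
  have "(\<rho>+2)*b < (\<rho>+2)*(2*y)"
  proof -
    have "(\<rho> + N - 1)*y < (2*\<rho> + 4)*y" using rho pos N by (intro mult_strict_right_mono) auto
    then show ?thesis using s1 by (simp add: algebra_simps)
  qed
  then show "b < 2*y" using rho N by (simp add: mult_less_cancel_left_pos)
  assume N4: "N \<ge> 4"
  have "(\<rho>+2)*(b*(N+1)) = ((\<rho>+2)*b)*(N+1)" by (simp add: algebra_simps)
  also have "\<dots> = ((\<rho> + N - 1)*y)*(N+1)" using s1 by simp
  also have "\<dots> = (\<rho> + N - 1)*(N+1)*y" by (simp add: algebra_simps)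
  also have "\<dots> < (\<rho>+2)*(2*(N-1)*y)"
  proof -
    have "(\<rho>+2)*(2*(N-1)) - (\<rho> + N - 1)*(N+1) = (N-3)*(\<rho> - (N-1))" by (simp add: algebra_simps)
    moreover have "(N-3)*(\<rho> - (N-1)) > 0" using N4 rho by simp
    ultimately have "(\<rho> + N - 1)*(N+1) < (\<rho>+2)*(2*(N-1))" by linarith
    then show ?thesis using pos by (simp add: mult_strict_right_mono mult.assoc[symmetric])
  qed
  finally show "b*(N+1) < 2*(N-1)*y" using rho N by (simp add: mult_less_cancel_left_pos)
qed

lemma H_rho_expr:
  fixes a y b \<rho> N :: real
  assumes nrm: "a^2 + (N-2)*y^2 + b^2 = 1"
    and e1: "\<rho> * a = (N - 2)*y + b" and e2: "\<rho> * y = a + (N - 3)*y + 2*b"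
    and e3: "\<rho> * b = a + 2*(N - 2)*y"
  shows "\<rho> = (a + (N-2)*y + b)^2 - 1 + 2*(N-2)*y*b"
proof -
  have "\<rho> = \<rho> * (a^2 + (N-2)*y^2 + b^2)" using nrm by simp
  also have "\<dots> = a*(\<rho>*a) + (N-2)*y*(\<rho>*y) + b*(\<rho>*b)" by (simp add: algebra_simps power2_eq_square)
  also have "\<dots> = a*((N - 2)*y + b) + (N-2)*y*(a + (N - 3)*y + 2*b) + b*(a + 2*(N - 2)*y)"
    by (simp only: e1 e2 e3)
  also have "\<dots> = (a + (N-2)*y + b)^2 - (a^2 + (N-2)*y^2 + b^2) + 2*(N-2)*y*b"
    by (simp add: algebra_simps power2_eq_square)
  finally show ?thesis using nrm by simp
qed

lemma H5_bound:
  fixes a y b \<rho> :: real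
  assumes pos: "y > 0"
    and e1: "\<rho> * a = 3*y + b" and e2: "\<rho> * y = a + 2*y + 2*b"
    and e3: "\<rho> * b = a + 6*y"
  shows "\<rho> < 188/35"
proof -
  have f1: "(\<rho>+2)*b = (\<rho>+4)*y" using e2 e3 by (simp add: algebra_simps)
  have f2: "(\<rho>^2 - 1)*b = (6*\<rho>+3)*y"
  proof -
    have "\<rho>*(\<rho>*b) = \<rho>*a + 6*\<rho>*y" using e3 by (simp add: algebra_simps)
    then show ?thesis using e1 by (simp add: algebra_simps power2_eq_square)
  qed
  have "(\<rho>^2 - 1)*((\<rho>+4)*y) = (\<rho>^2 - 1)*((\<rho>+2)*b)" using f1 by simp
  also have "\<dots> = (\<rho>+2)*((\<rho>^2 - 1)*b)" by (simp add: algebra_simps)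
  also have "\<dots> = (\<rho>+2)*((6*\<rho>+3)*y)" using f2 by simp
  finally have "(\<rho>^2 - 1)*((\<rho>+4)*y) = (\<rho>+2)*((6*\<rho>+3)*y)" .
  then have "(\<rho>^3 - 2*\<rho>^2 - 16*\<rho> - 10) * y = 0" by (simp add: algebra_simps power2_eq_square power3_eq_cube)
  then have cub: "\<rho>^3 - 2*\<rho>^2 - 16*\<rho> - 10 = 0" using pos by simp
  show ?thesis
  proof (rule ccontr)
    assume "\<not> ?thesis"
    then have r: "\<rho> \<ge> 188/35" by simp
    define c :: real where "c = 188/35"
    have "\<rho>^3 - 2*\<rho>^2 - 16*\<rho> - 10 = (\<rho> - c)*(\<rho>^2 + (c-2)*\<rho> + (c^2 - 2*c - 16)) + (c^3 - 2*c^2 - 16*c - 10)"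
      by (simp add: algebra_simps power2_eq_square power3_eq_cube)
    moreover have "(\<rho> - c)*(\<rho>^2 + (c-2)*\<rho> + (c^2 - 2*c - 16)) \<ge> 0"
    proof -
      have "c^2 - 2*c - 16 \<ge> 0" unfolding c_def by (simp add: power2_eq_square)
      moreover have "(c-2)*\<rho> \<ge> 0" using r unfolding c_def by simp
      moreover have "\<rho>^2 \<ge> 0" by simp
      moreover have "\<rho> - c \<ge> 0" using r unfolding c_def by simp
      ultimately show ?thesis by (intro mult_nonneg_nonneg) auto
    qed
    moreover have "c^3 - 2*c^2 - 16*c - 10 > 0" unfolding c_def by (simp add: power2_eq_square power3_eq_cube)
    ultimately show False using cub by linarith
  qed
qed

lemma scalarB:
  fixes s c u N b y :: real
  assumes "N = s + c + u" "s \<ge> 1" "c \<ge> 3" "u \<ge> s + 1" "b > 0" "b < 2*y"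
  shows "(b + (c-1)*y) * u > (N-2)*b"
proof -
  have y: "y > 0" using assms by simp
  have "(b + (c-1)*y) * u - (N-2)*b = (c-1)*u*y - b*(s+c-2)" using assms(1) by (simp add: algebra_simps)
  moreover have "b*(s+c-2) < 2*y*(s+c-2)" using assms by (intro mult_strict_right_mono) auto
  moreover have "(c-1)*u \<ge> (c-1)*(s+1)" using assms by (intro mult_left_mono) auto
  then have "(c-1)*u*y \<ge> (c-1)*(s+1)*y" using y by (intro mult_right_mono) auto
  moreover have "(c-1)*(s+1)*y - 2*y*(s+c-2) = (c-3)*(s-1)*y" by (simp add: algebra_simps)
  moreover have "(c-3)*(s-1)*y \<ge> 0" using assms y by simp
  ultimately show ?thesis by linarith
qed

lemma scalarA:
  fixes s N b y :: real
  assumes "2* s \<le> N - 1" "N \<ge> 7" "s \<ge> 2" "b > 0" "y > 0" "b*(N+1) < 2*(N-1)*y"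
  shows "(b+(s-1)*y)^2 - (b^2 + (s-1)*y^2) + 2*(b+(s-1)*y)*((N-2* s)*y) > 2*(N-2)*y*b"
proof -
  have id: "(b+(s-1)*y)^2 - (b^2 + (s-1)*y^2) + 2*(b+(s-1)*y)*((N-2* s)*y) - 2*(N-2)*y*b
        = (s-1)*y*((2*N-3* s-2)*y - 2*b)" by (simp add: algebra_simps power2_eq_square)
  have "(2*N-3* s-2)*y - 2*b > 0"
  proof -
    have k: "2*N-3* s-2 \<ge> (N-1)/2" using assms by simp
    have "(N+1)*((2*N-3* s-2)*y) \<ge> (N+1)*((N-1)/2*y)"
      using k assms by (intro mult_left_mono mult_right_mono) auto
    moreover have "(N+1)*((N-1)/2*y) \<ge> 4*(N-1)*y"
    proof -
      have "(N+1)/2 \<ge> 4" using assms by simp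
      then have "(N+1)/2*((N-1)*y) \<ge> 4*((N-1)*y)" using assms by (intro mult_right_mono) auto
      then show ?thesis by (simp add: algebra_simps)
    qed
    moreover have "4*(N-1)*y > (N+1)*(2*b)" using assms(6) by (simp add: algebra_simps)
    ultimately have "(N+1)*((2*N-3* s-2)*y) > (N+1)*(2*b)" by linarith
    then show ?thesis using assms by (simp add: mult_less_cancel_left_pos)
  qed
  moreover have "(s-1)*y > 0" using assms by simp
  ultimately have "(s-1)*y*((2*N-3* s-2)*y - 2*b) > 0" by simp
  then show ?thesis using id by linarith
qed


definition xp :: "'a \<Rightarrow> 'a \<Rightarrow> real \<Rightarrow> real \<Rightarrow> real \<Rightarrow> 'a \<Rightarrow> real" where
  "xp w0 p0 a b y = (\<lambda>v. if v = w0 then a else if v = p0 then b else y)"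

lemma sum_xp_none:
  assumes "w0 \<notin> A" "p0 \<notin> A"
  shows "(\<Sum>v\<in>A. f (xp w0 p0 a b y v)) = real (card A) * f y"
proof -
  have "(\<Sum>v\<in>A. f (xp w0 p0 a b y v)) = (\<Sum>v\<in>A. f y)"
    using assms unfolding xp_def by (intro sum.cong) auto
  then show ?thesis by simp
qed

lemma sum_xp_p:
  assumes "finite A" "w0 \<notin> A" "p0 \<in> A"
  shows "(\<Sum>v\<in>A. f (xp w0 p0 a b y v)) = f b + (real (card A) - 1) * f y"
proof -
  have "(\<Sum>v\<in>A. f (xp w0 p0 a b y v)) = f (xp w0 p0 a b y p0) + (\<Sum>v\<in>A - {p0}. f (xp w0 p0 a b y v))"
    using assms by (simp add: sum.remove)
  also have "(\<Sum>v\<in>A - {p0}. f (xp w0 p0 a b y v)) = real (card (A - {p0})) * f y"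
    using assms by (intro sum_xp_none) auto
  also have "real (card (A - {p0})) = real (card A) - 1"
  proof -
    have "card A \<ge> 1" using assms card_gt_0_iff[of A] by fastforce
    then show ?thesis using assms by (simp add: card_Diff_singleton of_nat_diff)
  qed
  finally show ?thesis using assms unfolding xp_def by auto
qed

lemma sum_xp_both:
  assumes "finite A" "w0 \<in> A" "p0 \<in> A" "w0 \<noteq> p0"
  shows "(\<Sum>v\<in>A. f (xp w0 p0 a b y v)) = f a + f b + (real (card A) - 2) * f y"
proof -
  have "(\<Sum>v\<in>A. f (xp w0 p0 a b y v)) = f (xp w0 p0 a b y w0) + (\<Sum>v\<in>A - {w0}. f (xp w0 p0 a b y v))"
    using assms by (simp add: sum.remove)
  also have "(\<Sum>v\<in>A - {w0}. f (xp w0 p0 a b y v)) = f b + (real (card (A - {w0})) - 1) * f y"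
    using assms by (intro sum_xp_p) auto
  also have "real (card (A - {w0})) = real (card A) - 1"
  proof -
    have "card A \<ge> 1" using assms card_gt_0_iff[of A] by fastforce
    then show ?thesis using assms by (simp add: card_Diff_singleton of_nat_diff)
  qed
  finally show ?thesis unfolding xp_def by (simp add: algebra_simps)
qed

lemma iso_construct:
  assumes fin: "finite V" and cV: "card V = n" and n: "n \<ge> 3"
    and w0: "w0 \<in> V" and p0: "p0 \<in> V" and wp: "w0 \<noteq> p0"
    and Eq: "\<forall>u\<in>V. \<forall>v\<in>V. E u v \<longleftrightarrow> (u \<noteq> v \<and> (u = w0 \<or> v = w0 \<or> (u \<notin> {w0,p0} \<and> v \<notin> {w0,p0})))"
  shows "graph_iso V E {0..<n} (special_graph n)"
proof -
  define R where "R = V - {w0,p0}"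
  have cR: "card R = n - 2" unfolding R_def using fin w0 p0 wp cV by (simp add: card_Diff_subset)
  obtain g where g: "bij_betw g R {0..<card R}" using ex_bij_betw_finite_nat[of R] fin unfolding R_def by blast
  define \<phi> where "\<phi> = (\<lambda>v. if v = w0 then 0 else if v = p0 then n - 1 else Suc (g v))"
  have gR: "v \<in> R \<Longrightarrow> g v < n - 2" for v using g cR unfolding bij_betw_def by auto
  have ginj: "inj_on g R" using g unfolding bij_betw_def by simp
  have phi0: "\<phi> v = 0 \<longleftrightarrow> v = w0" if "v \<in> V" for v unfolding \<phi>_def using n by auto
  have phiR: "(1 \<le> \<phi> v \<and> \<phi> v \<le> n - 2) \<longleftrightarrow> v \<in> R" if "v \<in> V" for v
    unfolding \<phi>_def R_def using n that gR[of v] by (auto simp: R_def)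
  have phin: "\<phi> v < n" if "v \<in> V" for v
    unfolding \<phi>_def using n that gR[of v] by (auto simp: R_def)
  have phil: "\<phi> v = n - 1 \<longleftrightarrow> v = p0" if "v \<in> V" for v
  proof
    assume h: "\<phi> v = n - 1"
    show "v = p0"
    proof (rule ccontr)
      assume "v \<noteq> p0"
      moreover have "v \<noteq> w0" using h n unfolding \<phi>_def by auto
      ultimately have "v \<in> R" using that unfolding R_def by auto
      then have "g v < n - 2" by (rule gR)
      moreover have "\<phi> v = Suc (g v)" using \<open>v \<noteq> p0\<close> \<open>v \<noteq> w0\<close> unfolding \<phi>_def by simp
      ultimately show False using h n by simp
    qed
  qed (use wp in \<open>simp add: \<phi>_def\<close>)
  have inj: "inj_on \<phi> V"
  proof (rule inj_onI)
    fix u v assume u: "u \<in> V" and v: "v \<in> V" and e: "\<phi> u = \<phi> v"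
    show "u = v"
    proof (cases "u \<in> R")
      case True
      then have "v \<in> R" using phiR[OF u] phiR[OF v] e by simp
      then have "g u = g v" using e True unfolding \<phi>_def R_def by auto
      then show ?thesis using ginj True \<open>v \<in> R\<close> by (meson inj_onD)
    next
      case False
      then have "u = w0 \<or> u = p0" using u unfolding R_def by auto
      then show ?thesis using e phi0[OF u] phi0[OF v] phil[OF u] phil[OF v] by auto
    qed
  qed
  have img: "\<phi> ` V = {0..<n}"
  proof (rule card_subset_eq)
    show "finite {0..<n}" by simp
    show "\<phi> ` V \<subseteq> {0..<n}" using phin by auto
    show "card (\<phi> ` V) = card {0..<n}" using card_image[OF inj] cV by simp
  qed
  have bij: "bij_betw \<phi> V {0..<n}" unfolding bij_betw_def using inj img by simp
  have "E u v \<longleftrightarrow> special_graph n (\<phi> u) (\<phi> v)" if u: "u \<in> V" and v: "v \<in> V" for u v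
  proof -
    have "\<phi> u \<noteq> \<phi> v \<longleftrightarrow> u \<noteq> v" using inj u v by (meson inj_onD)
    moreover have "u \<notin> {w0,p0} \<longleftrightarrow> u \<in> R" "v \<notin> {w0,p0} \<longleftrightarrow> v \<in> R" using u v unfolding R_def by auto
    ultimately show ?thesis using Eq u v phi0[OF u] phi0[OF v] phiR[OF u] phiR[OF v] phin[OF u] phin[OF v]
      unfolding special_graph_def by auto
  qed
  then show ?thesis unfolding graph_iso_def using bij by blast
qed


lemma caseA:
  fixes V :: "'a set"
  assumes sg: "simple_graph V E" and conn: "connected_graph V E" and cV: "card V = n" and n3: "n \<ge> 3"
    and nodd: "odd n"
    and S: "S \<subseteq> V" "card S = s" "s \<ge> 1" and I0: "I0 \<subseteq> V - S" "card I0 = s"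
    and iso0: "\<forall>u\<in>I0. \<forall>w\<in>V - S. w \<noteq> u \<longrightarrow> \<not> E u w"
    and ub: "\<forall>z. (\<forall>v. z v \<ge> 0) \<longrightarrow> quadf V (dist_matrix V E) z \<le> \<rho> * nsq V z"
    and pos: "a > 0" "y > 0" "b > 0" and nrm: "a^2 + (real n - 2)*y^2 + b^2 = 1"
    and e1: "\<rho> * a = (real n - 2)*y + b" and e2: "\<rho> * y = a + (real n - 3)*y + 2*b"
    and e3: "\<rho> * b = a + 2*(real n - 2)*y"
    and niso: "\<not> graph_iso V E {0..<n} (special_graph n)"
  shows False
proof -
  have fin: "finite V" using sg unfolding simple_graph_def by simp
  have symE: "\<forall>u v. E u v \<longrightarrow> E v u" using sg unfolding simple_graph_def by blast
  define R where "R = V - S - I0"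
  have finS: "finite S" "finite I0" "finite R"
    using finite_subset[OF S(1) fin] finite_subset[of I0 V] I0(1) fin unfolding R_def by auto
  have cVS: "card (V - S) = n - s" using S fin cV by (simp add: card_Diff_subset finite_subset)
  have sI: "s \<le> n - s" using card_mono[OF _ I0(1)] fin I0 cVS by simp
  have cR: "card R = n - 2 * s" unfolding R_def using I0 cVS finS
    by (simp add: card_Diff_subset)
  have n2s: "n \<ge> 2 * s + 1" using sI nodd by presburger
  have rcR: "real (card R) = real n - 2 * real s" using cR n2s by (simp add: of_nat_diff)
  obtain w0 where w0: "w0 \<in> S" using S by fastforce
  obtain p0 where p0: "p0 \<in> I0" using I0 S by fastforce
  have wp: "w0 \<noteq> p0" using w0 p0 I0 by blast
  have w0V: "w0 \<in> V" "p0 \<in> V" using w0 p0 S I0 by auto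
  have w0I: "w0 \<notin> I0" "w0 \<notin> R" "p0 \<notin> R" using w0 p0 I0 unfolding R_def by auto
  define Qd where "Qd = {(u,v). u \<in> I0 \<and> v \<in> I0 \<and> u \<noteq> v}"
  define Q where "Q = Qd \<union> (I0 \<times> R) \<union> (R \<times> I0)"
  have RI: "R \<inter> I0 = {}" unfolding R_def by blast
  have RVS: "R \<subseteq> V - S" "I0 \<subseteq> V - S" unfolding R_def using I0 by auto
  have noE: "\<not> E u v" if "u \<in> I0" "v \<in> V - S" "v \<noteq> u" for u v
  proof -
    have "\<forall>w\<in>V - S. w \<noteq> u \<longrightarrow> \<not> E u w" using iso0 that(1) by (rule bspec)
    then show ?thesis using that(2,3) by blast
  qed
  have Qsub: "Q \<subseteq> {(u,v). u \<in> V \<and> v \<in> V \<and> u \<noteq> v \<and> \<not> E u v}"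
  proof
    fix p assume pQ: "p \<in> Q"
    obtain u v where p: "p = (u,v)" by (cases p)
    have cs: "(u \<in> I0 \<and> v \<in> I0 \<and> u \<noteq> v) \<or> (u \<in> I0 \<and> v \<in> R) \<or> (u \<in> R \<and> v \<in> I0)"
      using pQ unfolding p Q_def Qd_def by blast
    have "u \<in> V \<and> v \<in> V \<and> u \<noteq> v \<and> \<not> E u v"
    proof -
      from cs show ?thesis
      proof (elim disjE conjE)
        assume a: "u \<in> I0" "v \<in> I0" "u \<noteq> v"
        then have "v \<in> V - S" "u \<in> V - S" using RVS by auto
        then show ?thesis using noE[OF a(1)] a(3) by auto
      next
        assume a: "u \<in> I0" "v \<in> R"
        then have "v \<in> V - S" "u \<in> V - S" "u \<noteq> v" using RVS RI by auto
        then show ?thesis using noE[OF a(1)] by auto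
      next
        assume a: "u \<in> R" "v \<in> I0"
        then have "v \<in> V - S" "u \<in> V - S" "u \<noteq> v" using RVS RI by auto
        then have "\<not> E v u" using noE[OF a(2)] by auto
        then have "\<not> E u v" using symE by blast
        then show ?thesis using \<open>v \<in> V - S\<close> \<open>u \<in> V - S\<close> \<open>u \<noteq> v\<close> by auto
      qed
    qed
    then show "p \<in> {(u,v). u \<in> V \<and> v \<in> V \<and> u \<noteq> v \<and> \<not> E u v}" using p by simp
  qed
  have Qsum: "(\<Sum>p\<in>Q. x (fst p) * x (snd p)) = (\<Sum>v\<in>I0. x v)^2 - (\<Sum>v\<in>I0. (x v)^2) + 2 * (\<Sum>v\<in>I0. x v) * (\<Sum>v\<in>R. x v)" for x :: "'a \<Rightarrow> real"
  proof -
    have "Qd \<subseteq> I0 \<times> I0" unfolding Qd_def by auto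
    then have f1: "finite Qd" using finS(2) by (meson finite_SigmaI finite_subset)
    have d1: "Qd \<inter> (I0 \<times> R) = {}" "(Qd \<union> I0 \<times> R) \<inter> (R \<times> I0) = {}" using RI unfolding Qd_def by auto
    have "(\<Sum>p\<in>Q. x (fst p) * x (snd p)) = (\<Sum>p\<in>Qd. x (fst p) * x (snd p)) + (\<Sum>p\<in>I0 \<times> R. x (fst p) * x (snd p)) + (\<Sum>p\<in>R \<times> I0. x (fst p) * x (snd p))"
      unfolding Q_def using f1 finS d1 by (simp add: sum.union_disjoint)
    also have "(\<Sum>p\<in>Qd. x (fst p) * x (snd p)) = (\<Sum>v\<in>I0. x v)^2 - (\<Sum>v\<in>I0. (x v)^2)"
      unfolding Qd_def by (rule sum_offdiag[OF finS(2)])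
    finally show ?thesis by (simp add: sum_cross)
  qed
  have LB: "quadf V (dist_matrix V E) x \<ge> (\<Sum>v\<in>V. x v)^2 - nsq V x + (\<Sum>p\<in>Q. x (fst p) * x (snd p))"
    if "\<forall>v. x v \<ge> 0" for x :: "'a \<Rightarrow> real"
    using quad_lb[OF sg conn that Qsub] .
  have contra: "False" if "\<forall>v. z v \<ge> 0" "quadf V (dist_matrix V E) z > \<rho> * nsq V z" for z
  proof -
    have "quadf V (dist_matrix V E) z \<le> \<rho> * nsq V z" using ub that(1) by blast
    then show False using that(2) by linarith
  qed
  define x' where "x' = xp w0 p0 a b y"
  have x'nn: "\<forall>v. x' v \<ge> 0" using pos unfolding x'_def xp_def by auto
  have x'pos: "\<forall>v. x' v > 0" using pos unfolding x'_def xp_def by auto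
  have sV: "(\<Sum>v\<in>V. x' v) = a + (real n - 2) * y + b"
    using sum_xp_both[OF fin w0V wp, of "\<lambda>t. t"] cV unfolding x'_def by simp
  have nV: "nsq V x' = 1"
    using sum_xp_both[OF fin w0V wp, of "\<lambda>t. t^2"] cV nrm unfolding x'_def nsq_def by simp
  have sIx: "(\<Sum>v\<in>I0. x' v) = b + (real s - 1) * y"
    using sum_xp_p[OF finS(2) w0I(1) p0, of "\<lambda>t. t"] I0 unfolding x'_def by simp
  have sIx2: "(\<Sum>v\<in>I0. (x' v)^2) = b^2 + (real s - 1) * y^2"
    using sum_xp_p[OF finS(2) w0I(1) p0, of "\<lambda>t. t^2"] I0 unfolding x'_def by simp
  have sRx: "(\<Sum>v\<in>R. x' v) = (real n - 2 * real s) * y"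
    using sum_xp_none[OF w0I(2,3), of "\<lambda>t. t"] rcR unfolding x'_def by simp
  have rho: "\<rho> = (a + (real n - 2)*y + b)^2 - 1 + 2*(real n - 2)*y*b"
    by (rule H_rho_expr[OF nrm e1 e2 e3])
  have N3: "real n \<ge> 3" using n3 by simp
  consider (s1) "s = 1" | (big) "s \<ge> 2" "n \<ge> 7" | (small) "s \<ge> 2" "n < 7" using S by linarith
  then show False
  proof cases
    case big
    have bb: "b * (real n + 1) < 2 * (real n - 1) * y"
      using H_scalar(2)[OF N3 pos e1 e2 e3] big by simp
    have "(b+(real s-1)*y)^2 - (b^2 + (real s-1)*y^2) + 2*(b+(real s-1)*y)*((real n-2*real s)*y) > 2*(real n-2)*y*b"
      using scalarA[of "real s" "real n" b y] big n2s pos bb by simp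
    then have "(\<Sum>p\<in>Q. x' (fst p) * x' (snd p)) > 2*(real n-2)*y*b"
      unfolding Qsum sIx sIx2 sRx by (simp add: algebra_simps)
    then have "quadf V (dist_matrix V E) x' > \<rho> * nsq V x'"
      using LB[OF x'nn] sV nV rho by simp
    then show False using contra x'nn by blast
  next
    case small
    have n5: "n = 5" using small n2s nodd by presburger
    have s2: "s = 2" using small n2s n5 by simp
    define z where "z = (\<lambda>v. if v \<in> S then 1 else (3/2::real))"
    have znn: "\<forall>v. z v \<ge> 0" unfolding z_def by simp
    have cS: "card S = 2" "card (V - S) = 3" "card I0 = 2" "card R = 1"
      using S(2) I0(2) cVS cR n5 s2 by auto
    have zS: "(\<Sum>v\<in>S. f (z v)) = 2 * f 1" for f :: "real \<Rightarrow> real"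
    proof -
      have "(\<Sum>v\<in>S. f (z v)) = (\<Sum>v\<in>S. f 1)" unfolding z_def by (intro sum.cong) auto
      then show ?thesis using cS(1) by simp
    qed
    have zO: "(\<Sum>v\<in>A. f (z v)) = real (card A) * f (3/2)" if "A \<inter> S = {}" for A and f :: "real \<Rightarrow> real"
    proof -
      have "(\<Sum>v\<in>A. f (z v)) = (\<Sum>v\<in>A. f (3/2))" unfolding z_def using that by (intro sum.cong) auto
      then show ?thesis by simp
    qed
    have split: "(\<Sum>v\<in>V. f (z v)) = (\<Sum>v\<in>S. f (z v)) + (\<Sum>v\<in>V - S. f (z v))" for f :: "real \<Rightarrow> real"
      using sum.subset_diff[OF S(1) fin, of "\<lambda>v. f (z v)"] by simp
    have IS: "I0 \<inter> S = {}" "R \<inter> S = {}" "(V - S) \<inter> S = {}" using I0(1) unfolding R_def by auto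
    have a1: "(\<Sum>v\<in>V - S. z v) = 9/2" using zO[OF IS(3), of "\<lambda>t. t"] cS(2) by simp
    have a2: "(\<Sum>v\<in>S. z v) = 2" using zS[of "\<lambda>t. t"] by simp
    have sV: "(\<Sum>v\<in>V. z v) = 13/2" using split[of "\<lambda>t. t"] a1 a2 by simp
    have b1: "(\<Sum>v\<in>V - S. (z v)^2) = 27/4" using zO[OF IS(3), of "\<lambda>t. t^2"] cS(2) by (simp add: power2_eq_square)
    have b2: "(\<Sum>v\<in>S. (z v)^2) = 2" using zS[of "\<lambda>t. t^2"] by simp
    have nV: "nsq V z = 35/4" using split[of "\<lambda>t. t^2"] b1 b2 unfolding nsq_def by simp
    have c1: "(\<Sum>v\<in>I0. z v) = 3" using zO[OF IS(1), of "\<lambda>t. t"] cS(3) by simp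
    have c2: "(\<Sum>v\<in>I0. (z v)^2) = 9/2" using zO[OF IS(1), of "\<lambda>t. t^2"] cS(3) by (simp add: power2_eq_square)
    have c3: "(\<Sum>v\<in>R. z v) = 3/2" using zO[OF IS(2), of "\<lambda>t. t"] cS(4) by simp
    have q: "(\<Sum>p\<in>Q. z (fst p) * z (snd p)) = 27/2"
      unfolding Qsum c1 c2 c3 by (simp add: power2_eq_square)
    have "quadf V (dist_matrix V E) z \<ge> (13/2)^2 - 35/4 + 27/2" using LB[OF znn] sV nV q by simp
    then have g47: "quadf V (dist_matrix V E) z \<ge> 47" by (simp add: power2_eq_square)
    have e1': "\<rho> * a = 3*y + b" using e1 n5 by simp
    have e2': "\<rho> * y = a + 2*y + 2*b" using e2 n5 by simp
    have e3': "\<rho> * b = a + 6*y" using e3 n5 by simp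
    have "\<rho> < 188/35" by (rule H5_bound[OF pos(2) e1' e2' e3'])
    then have "\<rho> * nsq V z < 47" unfolding nV by simp
    then have "quadf V (dist_matrix V E) z > \<rho> * nsq V z" using g47 by linarith
    then show False by (rule contra[OF znn])
  next
    case s1
    have Sw: "S = {w0}"
    proof -
      obtain t where "S = {t}" using S s1 card_1_singletonE by blast
      then show ?thesis using w0 by simp
    qed
    have Ip: "I0 = {p0}"
    proof -
      obtain t where "I0 = {t}" using I0 s1 card_1_singletonE by blast
      then show ?thesis using p0 by simp
    qed
    have RV: "R = V - {w0,p0}" unfolding R_def Sw Ip by auto
    have QsumE: "(\<Sum>p\<in>Q. x' (fst p) * x' (snd p)) = 2*(real n-2)*y*b"
      unfolding Qsum sIx sIx2 sRx using s1 by (simp add: algebra_simps)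
    define H where "H = (\<lambda>u v. u \<noteq> v \<and> (u = w0 \<or> v = w0 \<or> (u \<notin> {w0,p0} \<and> v \<notin> {w0,p0})))"
    have sub: "H u v" if "u \<in> V" "v \<in> V" "E u v" for u v
    proof -
      have uv: "u \<noteq> v" using sg that(3) unfolding simple_graph_def by blast
      have np: "\<not> E p0 w" if "w \<in> V" "w \<noteq> w0" "w \<noteq> p0" for w
        using noE[of p0 w] that p0 unfolding Sw by auto
      show ?thesis
      proof (cases "u = w0 \<or> v = w0")
        case True then show ?thesis using uv unfolding H_def by auto
      next
        case False
        have "u \<noteq> p0" using np[of v] that False uv by auto
        moreover have "v \<noteq> p0" using np[of u] that False uv symE by auto
        ultimately show ?thesis using uv False unfolding H_def by auto
      qed
    qed
    show False
    proof (cases "\<forall>u\<in>V. \<forall>v\<in>V. E u v \<longleftrightarrow> H u v")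
      case True
      then have "graph_iso V E {0..<n} (special_graph n)"
        unfolding H_def by (rule iso_construct[OF fin cV n3 w0V wp])
      then show False using niso by blast
    next
      case False
      then obtain c d where cd0: "c \<in> V" "d \<in> V" "\<not> (E c d \<longleftrightarrow> H c d)" by blast
      then have cd: "H c d" "\<not> E c d" using sub[of c d] by blast+
      have cnd: "c \<noteq> d" using cd unfolding H_def by simp
      have ndc: "\<not> E d c" using cd symE by blast
      have QH: "\<not> H u v" if "(u,v) \<in> Q" for u v
      proof -
        have "(u = p0 \<and> v \<in> R) \<or> (u \<in> R \<and> v = p0)" using that unfolding Q_def Qd_def Ip by auto
        then show ?thesis unfolding H_def RV using wp by auto
      qed
      have Hs: "H d c" using cd unfolding H_def by auto
      define Q' where "Q' = insert (c,d) (insert (d,c) Q)"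
      have Q'sub: "Q' \<subseteq> {(u,v). u \<in> V \<and> v \<in> V \<and> u \<noteq> v \<and> \<not> E u v}"
        using Qsub cd0 cnd cd ndc unfolding Q'_def by auto
      have nQ: "(c,d) \<notin> Q" "(d,c) \<notin> Q" using QH cd(1) Hs by blast+
      have nQ2: "(c,d) \<notin> insert (d,c) Q" using nQ cnd by simp
      have "Q \<subseteq> V \<times> V" using Qsub by blast
      then have finQ: "finite Q" using fin by (meson finite_SigmaI finite_subset)
      have "(\<Sum>p\<in>Q'. x' (fst p) * x' (snd p)) = x' c * x' d + (x' d * x' c + (\<Sum>p\<in>Q. x' (fst p) * x' (snd p)))"
        unfolding Q'_def using nQ nQ2 finQ by simp
      moreover have "x' c * x' d > 0" "x' d * x' c > 0" using x'pos by simp_all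
      ultimately have "(\<Sum>p\<in>Q'. x' (fst p) * x' (snd p)) > 2*(real n-2)*y*b" using QsumE by simp
      then have "quadf V (dist_matrix V E) x' > \<rho> * nsq V x'"
        using quad_lb[OF sg conn x'nn Q'sub] sV nV rho by simp
      then show False using contra x'nn by blast
    qed
  qed
qed


lemma caseB:
  fixes V :: "'a set"
  assumes sg: "simple_graph V E" and conn: "connected_graph V E" and cV: "card V = n" and n3: "n \<ge> 3"
    and S: "S \<subseteq> V" "card S = s" "s \<ge> 1" and C1: "C1 \<subseteq> V - S" "card C1 \<ge> 3"
    and noE: "\<forall>u\<in>C1. \<forall>w\<in>V - S - C1. \<not> E u w"
    and cU: "card (V - S - C1) \<ge> s + 1"
    and ub: "\<forall>z. (\<forall>v. z v \<ge> 0) \<longrightarrow> quadf V (dist_matrix V E) z \<le> \<rho> * nsq V z"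
    and pos: "a > 0" "y > 0" "b > 0" and nrm: "a^2 + (real n - 2)*y^2 + b^2 = 1"
    and e1: "\<rho> * a = (real n - 2)*y + b" and e2: "\<rho> * y = a + (real n - 3)*y + 2*b"
    and e3: "\<rho> * b = a + 2*(real n - 2)*y"
  shows False
proof -
  have fin: "finite V" using sg unfolding simple_graph_def by simp
  have symE: "\<forall>u v. E u v \<longrightarrow> E v u" using sg unfolding simple_graph_def by blast
  define U where "U = V - S - C1"
  have finS: "finite S" "finite C1" "finite U"
    using finite_subset[OF S(1) fin] finite_subset[of C1 V] C1(1) fin unfolding U_def by auto
  have cn: "n = s + card C1 + card U"
  proof -
    have "card (V - S) = n - s" using S fin cV by (simp add: card_Diff_subset finite_subset)
    moreover have "card U = card (V - S) - card C1" unfolding U_def using C1(1) finS by (simp add: card_Diff_subset)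
    moreover have "card C1 \<le> card (V - S)" using card_mono[OF _ C1(1)] fin by simp
    moreover have "s \<le> n" using card_mono[OF fin S(1)] S cV by simp
    ultimately show ?thesis by simp
  qed
  obtain w0 where w0: "w0 \<in> S" using S by fastforce
  obtain p0 where p0: "p0 \<in> C1" using C1 by fastforce
  have wp: "w0 \<noteq> p0" using w0 p0 C1 by blast
  have w0V: "w0 \<in> V" "p0 \<in> V" using w0 p0 S C1 by auto
  have w0I: "w0 \<notin> C1" "w0 \<notin> U" "p0 \<notin> U" using w0 p0 C1 unfolding U_def by auto
  define Q where "Q = (C1 \<times> U) \<union> (U \<times> C1)"
  have CU: "C1 \<inter> U = {}" unfolding U_def by blast
  have Qsub: "Q \<subseteq> {(u,v). u \<in> V \<and> v \<in> V \<and> u \<noteq> v \<and> \<not> E u v}"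
  proof
    fix p assume pQ: "p \<in> Q"
    obtain u v where p: "p = (u,v)" by (cases p)
    have cs: "(u \<in> C1 \<and> v \<in> U) \<or> (u \<in> U \<and> v \<in> C1)" using pQ unfolding p Q_def by blast
    have "u \<in> V \<and> v \<in> V \<and> u \<noteq> v \<and> \<not> E u v"
    proof -
      from cs show ?thesis
      proof (elim disjE conjE)
        assume a: "u \<in> C1" "v \<in> U"
        have "\<forall>w\<in>V - S - C1. \<not> E u w" using noE a(1) by (rule bspec)
        then have "\<not> E u v" using a(2) unfolding U_def by blast
        moreover have "u \<in> V" "v \<in> V" "u \<noteq> v" using a C1(1) CU unfolding U_def by auto
        ultimately show ?thesis by simp
      next
        assume a: "u \<in> U" "v \<in> C1"
        have "\<forall>w\<in>V - S - C1. \<not> E v w" using noE a(2) by (rule bspec)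
        then have "\<not> E v u" using a(1) unfolding U_def by blast
        then have "\<not> E u v" using symE by blast
        moreover have "u \<in> V" "v \<in> V" "u \<noteq> v" using a C1(1) CU unfolding U_def by auto
        ultimately show ?thesis by simp
      qed
    qed
    then show "p \<in> {(u,v). u \<in> V \<and> v \<in> V \<and> u \<noteq> v \<and> \<not> E u v}" using p by simp
  qed
  have Qsum: "(\<Sum>p\<in>Q. x (fst p) * x (snd p)) = 2 * (\<Sum>v\<in>C1. x v) * (\<Sum>v\<in>U. x v)" for x :: "'a \<Rightarrow> real"
  proof -
    have d1: "(C1 \<times> U) \<inter> (U \<times> C1) = {}" using CU by auto
    have "(\<Sum>p\<in>Q. x (fst p) * x (snd p)) = (\<Sum>p\<in>C1 \<times> U. x (fst p) * x (snd p)) + (\<Sum>p\<in>U \<times> C1. x (fst p) * x (snd p))"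
      unfolding Q_def using finS d1 by (simp add: sum.union_disjoint)
    then show ?thesis by (simp add: sum_cross)
  qed
  define x' where "x' = xp w0 p0 a b y"
  have x'nn: "\<forall>v. x' v \<ge> 0" using pos unfolding x'_def xp_def by auto
  have sV: "(\<Sum>v\<in>V. x' v) = a + (real n - 2) * y + b"
    using sum_xp_both[OF fin w0V wp, of "\<lambda>t. t"] cV unfolding x'_def by simp
  have nV: "nsq V x' = 1"
    using sum_xp_both[OF fin w0V wp, of "\<lambda>t. t^2"] cV nrm unfolding x'_def nsq_def by simp
  have sC: "(\<Sum>v\<in>C1. x' v) = b + (real (card C1) - 1) * y"
    using sum_xp_p[OF finS(2) w0I(1) p0, of "\<lambda>t. t"] unfolding x'_def by simp
  have sU: "(\<Sum>v\<in>U. x' v) = real (card U) * y"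
    using sum_xp_none[OF w0I(2,3), of "\<lambda>t. t"] unfolding x'_def by simp
  have rho: "\<rho> = (a + (real n - 2)*y + b)^2 - 1 + 2*(real n - 2)*y*b"
    by (rule H_rho_expr[OF nrm e1 e2 e3])
  have N3: "real n \<ge> 3" using n3 by simp
  have b2: "b < 2*y" using H_scalar(1)[OF N3 pos e1 e2 e3] .
  have "(b + (real (card C1) - 1)*y) * real (card U) > (real n - 2)*b"
    using scalarB[of "real n" "real s" "real (card C1)" "real (card U)" b y] cn S C1 cU pos b2 unfolding U_def
    by simp
  then have "2*y*((b + (real (card C1) - 1)*y) * real (card U)) > 2*y*((real n - 2)*b)"
    using pos by simp
  then have "(\<Sum>p\<in>Q. x' (fst p) * x' (snd p)) > 2*(real n-2)*y*b"
    unfolding Qsum sC sU by (simp add: algebra_simps)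
  then have "quadf V (dist_matrix V E) x' > \<rho> * nsq V x'"
    using quad_lb[OF sg conn x'nn Qsub] sV nV rho by simp
  moreover have "quadf V (dist_matrix V E) x' \<le> \<rho> * nsq V x'" using ub x'nn by blast
  ultimately show False by linarith
qed


lemma comps_finite: "finite W \<Longrightarrow> finite (Defs.components W F)"
  unfolding Defs.components_def by simp

lemma comp_finite: "finite W \<Longrightarrow> C \<in> Defs.components W F \<Longrightarrow> finite C"
proof -
  assume "finite W" "C \<in> Defs.components W F"
  then have "C \<subseteq> W" "finite W" by (simp_all add: comp_sub)
  then show "finite C" by (rule finite_subset)
qed

theorem theorem3:
  fixes V :: "'a set" and E :: "'a \<Rightarrow> 'a \<Rightarrow> bool" and k n :: nat
  assumes "odd k" and "k \<ge> 3" and "odd n" and "n \<ge> 3"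
    and "simple_graph V E" and "connected_graph V E" and "card V = n"
    and "distance_spectral_radius V E \<le> distance_spectral_radius {0..<n} (special_graph n)"
    and "\<not> graph_iso V E {0..<n} (special_graph n)"
  shows "GFC k V E"
proof (rule ccontr)
  note kodd = assms(1) and k3 = assms(2) and nodd = assms(3) and n3 = assms(4)
    and sg = assms(5) and conn = assms(6) and cV = assms(7) and rle = assms(8) and niso = assms(9)
  assume nG: "\<not> GFC k V E"
  have fin: "finite V" using sg unfolding simple_graph_def by simp
  have symE: "\<forall>u v. E u v \<longrightarrow> E v u" using sg unfolding simple_graph_def by blast
  have EV: "\<forall>u v. E u v \<longrightarrow> u \<in> V \<and> v \<in> V" using sg unfolding simple_graph_def by blast
  have Vne: "V \<noteq> {}" using cV n3 by auto
  obtain S where Sne: "S \<noteq> {}" and bar: "k_barrier k V E S"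
    using nG conn cV nodd unfolding GFC_def by blast
  have SV: "S \<subseteq> V" and btS: "bt_value k V E S = def_k k V E" using bar unfolding k_barrier_def by auto
  have bt0: "bt_value k V E {} = 1"
  proof -
    have d: "del_vertices E {} = E" unfolding del_vertices_def by (simp add: fun_eq_iff)
    have "\<And>v. v \<in> V \<Longrightarrow> {u \<in> V. reachable V E v u} = V" using conn unfolding connected_graph_def by blast
    then have c: "Defs.components V E = {V}" unfolding Defs.components_def using Vne by auto
    have "{C \<in> {V}. odd (card C) \<and> card C \<ge> 3} = {V}" using cV nodd n3 by auto
    then have "num_odd_nontrivial V E = 1" unfolding num_odd_nontrivial_def c by simp
    moreover have "num_isolated V E = 0" unfolding num_isolated_def c using cV n3 by simp
    ultimately show ?thesis unfolding bt_value_def d using kodd by simp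
  qed
  have "def_k k V E \<ge> bt_value k V E {}"
    unfolding def_k_def using fin by (intro Max_ge) auto
  then have btS1: "bt_value k V E S \<ge> 1" using btS bt0 by simp
  define W where "W = V - S"
  define F where "F = del_vertices E S"
  define q where "q = num_odd_nontrivial W F"
  define i where "i = num_isolated W F"
  define s where "s = card S"
  have ineq: "int q + int k * int i - int k * int s \<ge> 1"
    using btS1 kodd unfolding bt_value_def q_def i_def s_def W_def F_def by simp
  have finS: "finite S" using fin SV finite_subset by blast
  have s1: "s \<ge> 1" using Sne finS unfolding s_def by (simp add: Suc_le_eq card_gt_0_iff)
  have finW: "finite W" unfolding W_def using fin by simp
  have Fin: "\<forall>u v. F u v \<longrightarrow> u \<in> W \<and> v \<in> W" unfolding F_def W_def del_vertices_def using EV by blast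
  have symF: "\<forall>u v. F u v \<longrightarrow> F v u" unfolding F_def del_vertices_def using symE by blast
  have FE: "F u w" if "E u w" "u \<in> W" "w \<in> W" for u w using that unfolding F_def W_def del_vertices_def by blast
  let ?C = "Defs.components W F"
  have finC: "finite ?C" using comps_finite[OF finW] .
  obtain a y b where pos: "a > 0" "y > 0" "b > 0" and nrm: "a^2 + (real n - 2)*y^2 + b^2 = 1"
    and e1: "distance_spectral_radius {0..<n} (special_graph n) * a = (real n - 2)*y + b"
    and e2: "distance_spectral_radius {0..<n} (special_graph n) * y = a + (real n - 3)*y + 2*b"
    and e3: "distance_spectral_radius {0..<n} (special_graph n) * b = a + 2*(real n - 2)*y"
    using H_facts[OF n3] by blast
  define \<rho> where "\<rho> = distance_spectral_radius {0..<n} (special_graph n)"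
  have symD: "\<forall>u\<in>V. \<forall>v\<in>V. dist_matrix V E u v = dist_matrix V E v u"
    unfolding dist_matrix_def using gdist_sym[OF symE] by simp
  have ub: "\<forall>z. (\<forall>v. z v \<ge> 0) \<longrightarrow> quadf V (dist_matrix V E) z \<le> \<rho> * nsq V z"
  proof (intro allI impI)
    fix z :: "'a \<Rightarrow> real"
    have "quadf V (dist_matrix V E) z \<le> distance_spectral_radius V E * nsq V z"
      using lambda1_props(1)[OF fin Vne symD] unfolding distance_spectral_radius_def by blast
    also have "\<dots> \<le> \<rho> * nsq V z"
      using rle unfolding \<rho>_def by (intro mult_right_mono) (auto simp: nsq_def intro: sum_nonneg)
    finally show "quadf V (dist_matrix V E) z \<le> \<rho> * nsq V z" .
  qed
  note e1' = e1[folded \<rho>_def] and e2' = e2[folded \<rho>_def] and e3' = e3[folded \<rho>_def]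
  define isofam where "isofam = {C \<in> ?C. card C = 1}"
  define oddfam where "oddfam = {C \<in> ?C. odd (card C) \<and> card C \<ge> 3}"
  have ci: "card isofam = i" unfolding isofam_def i_def num_isolated_def ..
  have cq: "card oddfam = q" unfolding oddfam_def q_def num_odd_nontrivial_def ..
  have pdisj: "pairwise disjnt ?C"
    unfolding pairwise_def disjnt_def using comp_disj[OF symF] by blast
  show False
  proof (cases "i \<ge> s")
    case True
    obtain Fs where Fs: "Fs \<subseteq> isofam" "card Fs = s" "finite Fs"
      using obtain_subset_with_card_n[of s isofam] True ci by metis
    define I0 where "I0 = \<Union>Fs"
    have FsC: "Fs \<subseteq> ?C" using Fs unfolding isofam_def by auto
    have cI0: "card I0 = s"
    proof -
      have "card I0 = sum card Fs" unfolding I0_def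
        using FsC pdisj comp_finite[OF finW] by (intro card_Union_disjoint) (auto simp: pairwise_subset[OF pdisj FsC])
      also have "\<dots> = sum (\<lambda>_. 1) Fs" using Fs unfolding isofam_def by (intro sum.cong) auto
      finally show ?thesis using Fs by simp
    qed
    have I0sub: "I0 \<subseteq> V - S" unfolding I0_def using FsC comp_sub unfolding W_def by blast
    have iso0: "\<forall>u\<in>I0. \<forall>w\<in>V - S. w \<noteq> u \<longrightarrow> \<not> E u w"
    proof (intro ballI impI)
      fix u w assume u: "u \<in> I0" and w: "w \<in> V - S" and wu: "w \<noteq> u"
      obtain C where C: "C \<in> Fs" "u \<in> C" using u unfolding I0_def by blast
      have CC: "C \<in> ?C" "card C = 1" using C Fs FsC unfolding isofam_def by auto
      have Cu: "C = {u}" using CC(2) C(2) by (metis card_1_singletonE singletonD)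
      show "\<not> E u w"
      proof
        assume "E u w"
        then have "F u w" using FE u w I0sub unfolding W_def by blast
        then have "w \<in> C" using comp_closed[OF Fin CC(1) C(2)] by blast
        then show False using Cu wu by simp
      qed
    qed
    show False
      using caseA[OF sg conn cV n3 nodd SV s_def[symmetric] s1 I0sub cI0 iso0 ub pos nrm e1' e2' e3' niso] .
  next
    case False
    have qbig: "int q + int i \<ge> int s + 2"
    proof -
      have "int k * (int s - int i) \<ge> 3 * (int s - int i)" using False k3 by (intro mult_right_mono) auto
      then show ?thesis using ineq False by (simp add: algebra_simps)
    qed
    then have "q \<ge> 1" using False by linarith
    then obtain C1 where C1: "C1 \<in> oddfam" using cq by (metis card.empty card_gt_0_iff ex_in_conv not_one_le_zero)
    have C1C: "C1 \<in> ?C" "card C1 \<ge> 3" using C1 unfolding oddfam_def by auto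
    define fam where "fam = (oddfam \<union> isofam) - {C1}"
    have famC: "fam \<subseteq> ?C" unfolding fam_def oddfam_def isofam_def by auto
    have finfam: "finite oddfam" "finite isofam" using finC unfolding oddfam_def isofam_def by auto
    have dis: "oddfam \<inter> isofam = {}" unfolding oddfam_def isofam_def by auto
    have cfam: "card fam = q + i - 1"
      unfolding fam_def using C1 finfam dis cq ci by (simp add: card_Un_disjoint card_Diff_singleton)
    have "card (\<Union>fam) = sum card fam"
      using famC pdisj comp_finite[OF finW] by (intro card_Union_disjoint) (auto simp: pairwise_subset[OF pdisj famC])
    also have "\<dots> \<ge> sum (\<lambda>_. 1) fam"
    proof (intro sum_mono)
      fix C assume "C \<in> fam"
      then have "C \<in> ?C" using famC by blast
      then have "C \<noteq> {}" "finite C" using comp_ne comp_finite[OF finW] by auto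
      then show "1 \<le> card C" by (simp add: Suc_le_eq card_gt_0_iff)
    qed
    finally have cU1: "card (\<Union>fam) \<ge> q + i - 1" using cfam by simp
    have Usub: "\<Union>fam \<subseteq> V - S - C1"
    proof
      fix x assume "x \<in> \<Union>fam"
      then obtain C where C: "C \<in> fam" "x \<in> C" by blast
      have "C \<in> ?C" "C \<noteq> C1" using C famC unfolding fam_def by auto
      then have "x \<notin> C1" using comp_disj[OF symF _ C1C(1)] C(2) by blast
      moreover have "x \<in> W" using comp_sub \<open>C \<in> ?C\<close> C(2) by blast
      ultimately show "x \<in> V - S - C1" unfolding W_def by blast
    qed
    have "card (V - S - C1) \<ge> card (\<Union>fam)" using card_mono[OF _ Usub] fin by simp
    then have cU: "card (V - S - C1) \<ge> s + 1" using cU1 qbig by linarith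
    have C1sub: "C1 \<subseteq> V - S" using comp_sub[OF C1C(1)] unfolding W_def .
    have noE: "\<forall>u\<in>C1. \<forall>w\<in>V - S - C1. \<not> E u w"
    proof (intro ballI)
      fix u w assume u: "u \<in> C1" and w: "w \<in> V - S - C1"
      show "\<not> E u w"
      proof
        assume "E u w"
        then have "F u w" using FE u w C1sub unfolding W_def by blast
        then have "w \<in> C1" using comp_closed[OF Fin C1C(1) u] by blast
        then show False using w by blast
      qed
    qed
    show False
      using caseB[OF sg conn cV n3 SV s_def[symmetric] s1 C1sub C1C(2) noE cU ub pos nrm e1' e2' e3'] .
  qed
qed


end
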